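(* For $n\ge 0$ let $a(n)$ be the number of compositions of $n$ that avoid the composition $34543$ (i.e. $3\,4\,5\,4\,3$). Then $$\sum_{n=0}^{\infty} a(n)\,x^n = -\frac{1-4x+6x^{2}-4x^{3}+x^{4}+x^{16}+x^{13}-x^{14}+x^{9}-2x^{10}+x^{11}+x^{5}-3x^{6}+3x^{7}-x^{8}}{x^{18}+x^{17}-x^{16}+2x^{14}-x^{13}-2x^{11}+3x^{10}-x^{9}+2x^{8}-5x^{7}+4x^{6}-x^{5}-2x^{4}+7x^{3}-9x^{2}+5x-1}.$$ The first 31 terms $a(0),\dots,a(30)$ are $1, 1, 2, 4, 8, 16, 32, 64, 128, 256, 512, 1024, 2048, 4096, 8192, 16384, 32768, 65536, 131072, 262143, 524281, 1048546, 2097050, 4194001, 8387784, 16775108, 33549270, 67096623, 134189393, 268371074, 536726740$. Moreover $\lim_{n\to\infty} a(n+1)/a(n) = r$ with $r = 1.99994300442\ldots$, and $a(n)\sim c\, r^n$ with $c = 0.50029301491\ldots$.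
   Context: A composition of a non-negative integer $n$ is a finite ordered list $a_1 a_2\cdots a_k$ of positive integers with $a_1+\cdots+a_k=n$ (the empty composition is the unique composition of $0$). A composition $a_1\cdots a_k$ includes (contains) the composition $b_1\cdots b_s$ if $k\ge s$ and there exists $i$ with $1\le i\le k-s+1$ such that $b_j\le a_{i+j-1}$ for all $j=1,\dots,s$. It avoids $b_1\cdots b_s$ if it does not include it. The decimal constants are given by their printed initial digits. *)

theory Defs
  imports "HOL-Analysis.Analysis" "HOL-Computational_Algebra.Formal_Power_Series"
    "HOL-Library.Landau_Symbols"
begin

definition is_composition :: "nat \<Rightarrow> nat list \<Rightarrow> bool" where
  "is_composition n xs \<longleftrightarrow> (\<forall>x\<in>set xs. 0 < x) \<and> sum_list xs = n"

(* comp_includes as bs: as = a_1..a_k includes bs = b_1..b_s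
   (0-indexed version of: k \<ge> s and some i with b_j \<le> a_{i+j-1} for all j) *)
definition comp_includes :: "nat list \<Rightarrow> nat list \<Rightarrow> bool" where
  "comp_includes as bs \<longleftrightarrow> length bs \<le> length as \<and>
     (\<exists>i. i + length bs \<le> length as \<and> (\<forall>j<length bs. bs ! j \<le> as ! (i + j)))"

definition comp_avoids :: "nat list \<Rightarrow> nat list \<Rightarrow> bool" where
  "comp_avoids as bs \<longleftrightarrow> \<not> comp_includes as bs"

definition a34543 :: "nat \<Rightarrow> nat" where
  "a34543 n = card {xs. is_composition n xs \<and> comp_avoids xs [3,4,5,4,3]}"

end

theory Submission
  imports Defs
begin

unbundle no vec_syntax
unbundle fps_syntax


fun D1 :: "nat list \<Rightarrow> bool" where
  "D1 (x#_) = (3 \<le> x)" | "D1 [] = False"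
fun D2 :: "nat list \<Rightarrow> bool" where
  "D2 (x#y#_) = (4 \<le> x \<and> 3 \<le> y)" | "D2 _ = False"
fun D3 :: "nat list \<Rightarrow> bool" where
  "D3 (x#y#z#_) = (5 \<le> x \<and> 4 \<le> y \<and> 3 \<le> z)" | "D3 _ = False"
fun D4 :: "nat list \<Rightarrow> bool" where
  "D4 (x#y#z#w#_) = (4 \<le> x \<and> 5 \<le> y \<and> 4 \<le> z \<and> 3 \<le> w)" | "D4 _ = False"

lemma all_less_5: "(\<forall>j<(5::nat). P j) = (P 0 \<and> P 1 \<and> P 2 \<and> P 3 \<and> P 4)"
  by (auto simp: less_Suc_eq eval_nat_numeral)

lemma prefix_match: "(5 \<le> Suc (length xs) \<and> (\<forall>j<5. [3,4,5,4,3::nat] ! j \<le> (k#xs) ! j)) = (3 \<le> k \<and> D4 xs)"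
proof (cases xs rule: D4.cases)
  case (1 x y z w rest)
  then show ?thesis by (simp add: all_less_5)
qed (auto simp: all_less_5)

lemma inc5: "comp_includes xs [3,4,5,4,3] = (\<exists>i. i + 5 \<le> length xs \<and> (\<forall>j<5. [3,4,5,4,3::nat] ! j \<le> xs ! (i + j)))"
proof -
  have l5: "length [3,4,5,4,3::nat] = 5" by simp
  show ?thesis unfolding comp_includes_def l5 by auto
qed

lemma inc_Cons: "comp_includes (k#xs) [3,4,5,4,3] = (comp_includes xs [3,4,5,4,3] \<or> (3 \<le> k \<and> D4 xs))"
proof
  assume "comp_includes (k#xs) [3,4,5,4,3]"
  then obtain i where i0: "i + length [3,4,5,4,3::nat] \<le> length (k#xs)" "\<forall>j<length [3,4,5,4,3::nat]. [3,4,5,4,3::nat] ! j \<le> (k#xs) ! (i + j)"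
    unfolding comp_includes_def by blast
  have l5: "length [3,4,5,4,3::nat] = 5" by simp
  have i: "i + 5 \<le> Suc (length xs)" "\<forall>j<5. [3,4,5,4,3::nat] ! j \<le> (k#xs) ! (i + j)"
    using i0 unfolding l5 by auto
  show "comp_includes xs [3,4,5,4,3] \<or> (3 \<le> k \<and> D4 xs)"
  proof (cases i)
    case 0
    then show ?thesis using i prefix_match[of xs k] by auto
  next
    case (Suc i')
    then have "i' + 5 \<le> length xs" "\<forall>j<5. [3,4,5,4,3::nat] ! j \<le> xs ! (i' + j)" using i by auto
    then show ?thesis unfolding inc5 by blast
  qed
next
  assume "comp_includes xs [3,4,5,4,3] \<or> (3 \<le> k \<and> D4 xs)"
  then show "comp_includes (k#xs) [3,4,5,4,3]"
  proof
    assume "comp_includes xs [3,4,5,4,3]"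
    then obtain i where i0: "i + length [3,4,5,4,3::nat] \<le> length xs" "\<forall>j<length [3,4,5,4,3::nat]. [3,4,5,4,3::nat] ! j \<le> xs ! (i + j)"
      unfolding comp_includes_def by blast
    have l5: "length [3,4,5,4,3::nat] = 5" by simp
    have i: "i + 5 \<le> length xs" "\<forall>j<5. [3,4,5,4,3::nat] ! j \<le> xs ! (i + j)"
      using i0 unfolding l5 by auto
    then have "Suc i + 5 \<le> length (k#xs)" "\<forall>j<5. [3,4,5,4,3::nat] ! j \<le> (k#xs) ! (Suc i + j)" by auto
    then show ?thesis unfolding inc5 by blast
  next
    assume "3 \<le> k \<and> D4 xs"
    then have "0 + 5 \<le> length (k#xs)" "\<forall>j<5. [3,4,5,4,3::nat] ! j \<le> (k#xs) ! (0 + j)"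
      using prefix_match[of xs k] by auto
    then show ?thesis unfolding inc5 by blast
  qed
qed

definition st :: "nat list \<Rightarrow> nat" where
  "st xs = (if comp_includes xs [3,4,5,4,3] then 5 else if D4 xs then 4 else if D3 xs then 3
            else if D2 xs then 2 else if D1 xs then 1 else 0)"

definition dl :: "nat \<Rightarrow> nat \<Rightarrow> nat" where
  "dl k s = (if s = 5 then 5 else if k < 3 then 0 else if s = 4 then 5 else if s = 0 then 1
     else if k = 3 then 1 else if s = 1 then 2 else if s = 2 then (if k = 4 then 2 else 3) else 4)"

lemma D1_Cons: "D1 (k#xs) = (3 \<le> k)" by simp
lemma D2_Cons: "D2 (k#xs) = (4 \<le> k \<and> D1 xs)" by (cases xs) auto
lemma D3_Cons: "D3 (k#xs) = (5 \<le> k \<and> D2 xs)" by (cases xs rule: D2.cases) auto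
lemma D4_Cons: "D4 (k#xs) = (4 \<le> k \<and> D3 xs)" by (cases xs rule: D3.cases) auto
lemma D21: "D2 xs \<Longrightarrow> D1 xs" by (cases xs rule: D2.cases) auto
lemma D32: "D3 xs \<Longrightarrow> D2 xs" by (cases xs rule: D3.cases) auto
lemma D42: "D4 xs \<Longrightarrow> D2 xs" by (cases xs rule: D4.cases) auto

lemma st_Cons: "st (k#xs) = dl k (st xs)"
  using D21[of xs] D32[of xs] D42[of xs]
  unfolding st_def dl_def inc_Cons D1_Cons D2_Cons D3_Cons D4_Cons
  by auto

lemma st_le: "st xs \<le> 5" by (simp add: st_def)
lemma st_Nil: "st [] = 0"
  by (simp add: st_def comp_includes_def)

lemma avoid_st: "comp_avoids xs [3,4,5,4,3] = (st xs \<le> 4)"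
  by (simp add: st_def comp_avoids_def)



lemma comp_Nil_iff: "is_composition 0 xs = (xs = [])"
  by (cases xs) (auto simp: is_composition_def)

lemma comp_Cons_iff: "is_composition n (k#ys) = (0 < k \<and> k \<le> n \<and> is_composition (n-k) ys)"
  by (auto simp: is_composition_def)

lemma comp_length: "is_composition n xs \<Longrightarrow> length xs \<le> n"
proof (induction xs arbitrary: n)
  case (Cons x xs)
  then have "0 < x" "x \<le> n" "is_composition (n - x) xs" by (auto simp: comp_Cons_iff)
  then have "length xs \<le> n - x" using Cons.IH by blast
  then show ?case using \<open>0 < x\<close> \<open>x \<le> n\<close> by simp
qed simp

lemma finite_comp: "finite {xs. is_composition n xs}"
proof -
  have "{xs. is_composition n xs} \<subseteq> {xs. set xs \<subseteq> {..n} \<and> length xs \<le> n}"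
    using comp_length by (auto simp: is_composition_def member_le_sum_list)
  moreover have "finite {xs. set xs \<subseteq> {..n} \<and> length xs \<le> n}"
    by (rule finite_lists_length_le) simp
  ultimately show ?thesis by (rule finite_subset)
qed

lemma finite_comp_P: "finite {xs. is_composition n xs \<and> P xs}"
  by (rule finite_subset[OF _ finite_comp]) auto

lemma decomp:
  assumes "0 < n"
  shows "{xs. is_composition n xs \<and> P xs} = (\<Union>k\<in>{1..n}. Cons k ` {ys. is_composition (n-k) ys \<and> P (k#ys)})"
proof (intro equalityI subsetI)
  fix xs assume xs: "xs \<in> {xs. is_composition n xs \<and> P xs}"
  then obtain k ys where "xs = k#ys" using assms by (cases xs) (auto simp: is_composition_def)
  then show "xs \<in> (\<Union>k\<in>{1..n}. Cons k ` {ys. is_composition (n-k) ys \<and> P (k#ys)})"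
    using xs by (auto simp: comp_Cons_iff)
qed (auto simp: comp_Cons_iff)

lemma card_decomp:
  assumes "0 < n"
  shows "card {xs. is_composition n xs \<and> P xs} = (\<Sum>k\<in>{1..n}. card {ys. is_composition (n-k) ys \<and> P (k#ys)})"
proof -
  have "card (\<Union>k\<in>{1..n}. Cons k ` {ys. is_composition (n-k) ys \<and> P (k#ys)})
      = (\<Sum>k\<in>{1..n}. card (Cons k ` {ys. is_composition (n-k) ys \<and> P (k#ys)}))"
    by (rule card_UN_disjoint) (auto simp: finite_comp_P)
  also have "\<dots> = (\<Sum>k\<in>{1..n}. card {ys. is_composition (n-k) ys \<and> P (k#ys)})"
    by (intro sum.cong refl card_image) auto
  finally show ?thesis using decomp[OF assms] by simp
qed

definition fc :: "nat \<Rightarrow> nat \<Rightarrow> nat" where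
  "fc n s = card {xs. is_composition n xs \<and> st xs = s}"

lemma card_fibers:
  fixes g :: "nat list \<Rightarrow> nat"
  assumes "finite A" "\<And>x. x \<in> A \<Longrightarrow> g x \<le> m"
  shows "card A = (\<Sum>s\<le>m. card {x\<in>A. g x = s})"
proof -
  have "A = (\<Union>s\<in>{..m}. {x\<in>A. g x = s})" using assms(2) by auto
  then have "card A = card (\<Union>s\<in>{..m}. {x\<in>A. g x = s})" by simp
  also have "\<dots> = (\<Sum>s\<le>m. card {x\<in>A. g x = s})"
    by (rule card_UN_disjoint) (use assms(1) in auto)
  finally show ?thesis .
qed

lemma fc_0: "fc 0 s = (if s = 0 then 1 else 0)"
proof -
  have "{xs. is_composition 0 xs \<and> st xs = s} = (if s = 0 then {[]} else {})"
    by (auto simp: comp_Nil_iff st_Nil)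
  then show ?thesis by (simp add: fc_def)
qed

lemma fc_rec:
  assumes "0 < n"
  shows "fc n s = (\<Sum>k\<in>{1..n}. \<Sum>s'\<le>5. (if dl k s' = s then fc (n-k) s' else 0))"
proof -
  have "fc n s = (\<Sum>k\<in>{1..n}. card {ys. is_composition (n-k) ys \<and> dl k (st ys) = s})"
    unfolding fc_def using card_decomp[OF assms, of "\<lambda>xs. st xs = s"] by (simp add: st_Cons)
  also have "\<dots> = (\<Sum>k\<in>{1..n}. \<Sum>s'\<le>5. (if dl k s' = s then fc (n-k) s' else 0))"
  proof (intro sum.cong refl)
    fix k
    let ?A = "{ys. is_composition (n-k) ys \<and> dl k (st ys) = s}"
    have "card ?A = (\<Sum>s'\<le>5. card {x\<in>?A. st x = s'})"
      by (rule card_fibers) (simp_all add: finite_comp_P st_le)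
    also have "\<dots> = (\<Sum>s'\<le>5. (if dl k s' = s then fc (n-k) s' else 0))"
    proof (intro sum.cong refl)
      fix s'
      have "{x\<in>?A. st x = s'} = {xs. is_composition (n-k) xs \<and> st xs = s' \<and> dl k s' = s}"
        by blast
      then show "card {x\<in>?A. st x = s'} = (if dl k s' = s then fc (n-k) s' else 0)"
        by (simp add: fc_def)
    qed
    finally show "card ?A = \<dots>" .
  qed
  finally show ?thesis .
qed

lemma a_fc: "a34543 n = (\<Sum>s\<le>4. fc n s)"
proof -
  have "a34543 n = card {xs. is_composition n xs \<and> st xs \<le> 4}"
    unfolding a34543_def avoid_st ..
  also have "\<dots> = (\<Sum>s\<le>4. card {x\<in>{xs. is_composition n xs \<and> st xs \<le> 4}. st x = s})"
    by (rule card_fibers) (simp_all add: finite_comp_P)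
  also have "\<dots> = (\<Sum>s\<le>4. fc n s)"
  proof (intro sum.cong refl)
    fix s :: nat assume "s \<in> {..4}"
    then have "{x\<in>{xs. is_composition n xs \<and> st xs \<le> 4}. st x = s} = {xs. is_composition n xs \<and> st xs = s}"
      by auto
    then show "card {x\<in>{xs. is_composition n xs \<and> st xs \<le> 4}. st x = s} = fc n s"
      by (simp add: fc_def)
  qed
  finally show ?thesis .
qed


lemma ring_id:
  fixes x F0 F1 F2 F3 F4 :: "'a::idom"
  assumes e0: "F0 = 1 + (x + x^2) * (F0 + F1 + F2 + F3 + F4)"
    and e1: "(1 - x) * F1 = x^3 * F0 + (1 - x) * x^3 * (F1 + F2 + F3)"
    and e2: "(1 - x) * F2 = x^4 * F1 + (1 - x) * x^4 * F2"
    and e3: "(1 - x) * F3 = x^5 * F2"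
    and e4: "(1 - x) * F4 = x^4 * F3"
  shows "(F0 + F1 + F2 + F3 + F4) * (x^18 + x^17 - x^16 + 2*x^14 - x^13 - 2*x^11 + 3*x^10
              - x^9 + 2*x^8 - 5*x^7 + 4*x^6 - x^5 - 2*x^4 + 7*x^3
              - 9*x^2 + 5*x - 1) = - (1 - 4*x + 6*x^2 - 4*x^3 + x^4 + x^16 + x^13 - x^14
              + x^9 - 2*x^10 + x^11 + x^5 - 3*x^6 + 3*x^7 - x^8)"
proof -
  have "(F0 + F1 + F2 + F3 + F4) * (x^18 + x^17 - x^16 + 2*x^14 - x^13 - 2*x^11 + 3*x^10
              - x^9 + 2*x^8 - 5*x^7 + 4*x^6 - x^5 - 2*x^4 + 7*x^3
              - 9*x^2 + 5*x - 1) + (1 - 4*x + 6*x^2 - 4*x^3 + x^4 + x^16 + x^13 - x^14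
              + x^9 - 2*x^10 + x^11 + x^5 - 3*x^6 + 3*x^7 - x^8)
     = (-1 + 4*x - 6*x^2 + 4*x^3 - x^4 - x^5 + 3*x^6 - 3*x^7 + x^8 - x^9 + 2*x^10 - x^11 - x^13 + x^14 - x^16) * (F0 - (1 + (x + x^2) * (F0 + F1 + F2 + F3 + F4)))
     + (-1 + 3*x - 3*x^2 + x^3 - x^5 + 2*x^6 - x^7 - x^9 + x^10 - x^13) * ((1 - x) * F1 - (x^3 * F0 + (1 - x) * x^3 * (F1 + F2 + F3)))
     + (-1 + 3*x - 3*x^2 + x^3 - x^5 + 2*x^6 - x^7 - x^9 + x^10 + x^12 - x^13) * ((1 - x) * F2 - (x^4 * F1 + (1 - x) * x^4 * F2))
     + (-1 + 3*x - 3*x^2 + x^3 - x^5 + 2*x^6 - x^8 - x^9 + x^10 + x^12 - x^13) * ((1 - x) * F3 - x^5 * F2)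
     + (-1 + 3*x - 3*x^2 + 2*x^3 - 2*x^4 + 2*x^6 - x^7 + x^8 - 2*x^9 + x^10 + x^12 - x^13) * ((1 - x) * F4 - x^4 * F3)"
    by algebra
  also have "\<dots> = 0" using e0 e1 e2 e3 e4 by simp
  finally show ?thesis using eq_neg_iff_add_eq_0 by blast
qed



definition Fs :: "nat \<Rightarrow> real fps" where "Fs s = Abs_fps (\<lambda>n. real (fc n s))"
definition G :: "nat \<Rightarrow> real fps" where "G m = Abs_fps (\<lambda>k. if m \<le> k then 1 else 0)"
definition Wf :: "nat \<Rightarrow> nat \<Rightarrow> real fps" where
  "Wf s' s = Abs_fps (\<lambda>k. if 1 \<le> k \<and> dl k s' = s then 1 else 0)"

lemma Y_G: "(1 - fps_X) * G m = fps_X ^ m"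
  by (rule fps_ext) (auto simp: G_def left_diff_distrib)

lemma coeff_WF:
  "(Wf s' s * Fs s') $ n = (\<Sum>k\<in>{1..n}. if dl k s' = s then real (fc (n-k) s') else 0)"
proof -
  have "(Wf s' s * Fs s') $ n = (\<Sum>i=0..n. Wf s' s $ i * Fs s' $ (n - i))"
    by (rule fps_mult_nth)
  also have "\<dots> = Wf s' s $ 0 * Fs s' $ n + (\<Sum>i=1..n. Wf s' s $ i * Fs s' $ (n - i))"
    by (simp add: sum.atLeast_Suc_atMost)
  also have "\<dots> = (\<Sum>k\<in>{1..n}. if dl k s' = s then real (fc (n-k) s') else 0)"
  proof -
    have z: "Wf s' s $ 0 = 0" by (simp add: Wf_def)
    have "(\<Sum>i=1..n. Wf s' s $ i * Fs s' $ (n-i)) = (\<Sum>i=1..n. if dl i s' = s then real (fc (n-i) s') else 0)"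
      by (rule sum.cong[OF refl]) (auto simp: Wf_def Fs_def)
    then show ?thesis using z by simp
  qed
  finally show ?thesis .
qed

lemma sum5: "(\<Sum>s\<le>(4::nat). f s) = f 0 + f 1 + f 2 + f 3 + f 4"
  by (simp add: eval_nat_numeral atMost_Suc add.commute add.left_commute)

lemma Fs_eq:
  assumes "s \<le> 4"
  shows "Fs s = (if s = 0 then 1 else 0) + (\<Sum>s'\<le>4. Wf s' s * Fs s')"
proof (rule fps_ext)
  fix n
  show "Fs s $ n = ((if s = 0 then 1 else 0) + (\<Sum>s'\<le>4. Wf s' s * Fs s')) $ n"
  proof (cases "n = 0")
    case True
    then show ?thesis by (simp add: Fs_def fc_0 Wf_def fps_sum_nth)
  next
    case False
    then have "real (fc n s) = (\<Sum>k\<in>{1..n}. \<Sum>s'\<le>5. (if dl k s' = s then real (fc (n-k) s') else 0))"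
    proof -
      have r: "\<And>k s'. real (if dl k s' = s then fc (n-k) s' else 0) = (if dl k s' = s then real (fc (n-k) s') else 0)"
        by simp
      show ?thesis using fc_rec[of n s] False by (simp only: of_nat_sum r)
    qed
    also have "\<dots> = (\<Sum>s'\<le>5. \<Sum>k\<in>{1..n}. (if dl k s' = s then real (fc (n-k) s') else 0))"
      by (rule sum.swap)
    also have "\<dots> = (\<Sum>s'\<le>4. \<Sum>k\<in>{1..n}. (if dl k s' = s then real (fc (n-k) s') else 0))"
    proof -
      have "dl k 5 \<noteq> s" for k using assms by (simp add: dl_def)
      then show ?thesis by (simp add: atMost_Suc[of 4, simplified])
    qed
    also have "\<dots> = (\<Sum>s'\<le>4. (Wf s' s * Fs s') $ n)"
      by (simp add: coeff_WF)
    finally show ?thesis using False by (simp add: Fs_def fps_sum_nth)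
  qed
qed

lemma W0: "s' \<le> 4 \<Longrightarrow> Wf s' 0 = fps_X + fps_X^2"
  by (rule fps_ext) (auto simp: Wf_def dl_def)
lemma W01: "Wf 0 1 = G 3" by (rule fps_ext) (auto simp: Wf_def dl_def G_def)
lemma W11: "Wf 1 1 = fps_X^3" by (rule fps_ext) (auto simp: Wf_def dl_def)
lemma W21: "Wf 2 1 = fps_X^3" by (rule fps_ext) (auto simp: Wf_def dl_def)
lemma W31: "Wf 3 1 = fps_X^3" by (rule fps_ext) (auto simp: Wf_def dl_def)
lemma W41: "Wf 4 1 = 0" by (rule fps_ext) (auto simp: Wf_def dl_def)
lemma W02: "Wf 0 2 = 0" by (rule fps_ext) (auto simp: Wf_def dl_def)
lemma W12: "Wf 1 2 = G 4" by (rule fps_ext) (auto simp: Wf_def dl_def G_def)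
lemma W22: "Wf 2 2 = fps_X^4" by (rule fps_ext) (auto simp: Wf_def dl_def)
lemma W32: "Wf 3 2 = 0" by (rule fps_ext) (auto simp: Wf_def dl_def)
lemma W42: "Wf 4 2 = 0" by (rule fps_ext) (auto simp: Wf_def dl_def)
lemma W03: "Wf 0 3 = 0" by (rule fps_ext) (auto simp: Wf_def dl_def)
lemma W13: "Wf 1 3 = 0" by (rule fps_ext) (auto simp: Wf_def dl_def)
lemma W23: "Wf 2 3 = G 5" by (rule fps_ext) (auto simp: Wf_def dl_def G_def)
lemma W33: "Wf 3 3 = 0" by (rule fps_ext) (auto simp: Wf_def dl_def)
lemma W43: "Wf 4 3 = 0" by (rule fps_ext) (auto simp: Wf_def dl_def)
lemma W04: "Wf 0 4 = 0" by (rule fps_ext) (auto simp: Wf_def dl_def)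
lemma W14: "Wf 1 4 = 0" by (rule fps_ext) (auto simp: Wf_def dl_def)
lemma W24: "Wf 2 4 = 0" by (rule fps_ext) (auto simp: Wf_def dl_def)
lemma W34: "Wf 3 4 = G 4" by (rule fps_ext) (auto simp: Wf_def dl_def G_def)
lemma W44: "Wf 4 4 = 0" by (rule fps_ext) (auto simp: Wf_def dl_def)

lemma A_eq: "Abs_fps (\<lambda>n. real (a34543 n)) = Fs 0 + Fs 1 + Fs 2 + Fs 3 + Fs 4"
  by (rule fps_ext) (simp add: a_fc sum5 Fs_def)

lemma main_fps:
  "Abs_fps (\<lambda>n. real (a34543 n)) * (fps_X^18 + fps_X^17 - fps_X^16 + 2*fps_X^14 - fps_X^13 - 2*fps_X^11 + 3*fps_X^10
              - fps_X^9 + 2*fps_X^8 - 5*fps_X^7 + 4*fps_X^6 - fps_X^5 - 2*fps_X^4 + 7*fps_X^3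
              - 9*fps_X^2 + 5*fps_X - 1) = - (1 - 4*fps_X + 6*fps_X^2 - 4*fps_X^3 + fps_X^4 + fps_X^16 + fps_X^13 - fps_X^14
              + fps_X^9 - 2*fps_X^10 + fps_X^11 + fps_X^5 - 3*fps_X^6 + 3*fps_X^7 - fps_X^8)"
proof -
  have E0: "Fs 0 = 1 + (fps_X + fps_X^2) * (Fs 0 + Fs 1 + Fs 2 + Fs 3 + Fs 4)"
    using Fs_eq[of 0] by (simp add: sum5 W0 algebra_simps)
  have E1': "Fs 1 = G 3 * Fs 0 + fps_X^3 * (Fs 1 + Fs 2 + Fs 3)"
    using Fs_eq[of 1] unfolding sum5 W01 W11 W21 W31 W41 by (simp add: algebra_simps)
  have E2': "Fs 2 = G 4 * Fs 1 + fps_X^4 * Fs 2"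
    using Fs_eq[of 2] unfolding sum5 W02 W12 W22 W32 W42 by (simp add: algebra_simps)
  have E3': "Fs 3 = G 5 * Fs 2"
    using Fs_eq[of 3] unfolding sum5 W03 W13 W23 W33 W43 by (simp add: algebra_simps)
  have E4': "Fs 4 = G 4 * Fs 3"
    using Fs_eq[of 4] unfolding sum5 W04 W14 W24 W34 W44 by (simp add: algebra_simps)
  have E1: "(1 - fps_X) * Fs 1 = fps_X^3 * Fs 0 + (1 - fps_X) * fps_X^3 * (Fs 1 + Fs 2 + Fs 3)"
  proof -
    have "(1 - fps_X) * Fs 1 = ((1 - fps_X) * G 3) * Fs 0 + (1 - fps_X) * fps_X^3 * (Fs 1 + Fs 2 + Fs 3)"
      by (subst E1') (simp add: algebra_simps)
    then show ?thesis by (simp add: Y_G)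
  qed
  have E2: "(1 - fps_X) * Fs 2 = fps_X^4 * Fs 1 + (1 - fps_X) * fps_X^4 * Fs 2"
  proof -
    have "(1 - fps_X) * Fs 2 = ((1 - fps_X) * G 4) * Fs 1 + (1 - fps_X) * fps_X^4 * Fs 2"
      by (subst E2') (simp add: algebra_simps)
    then show ?thesis by (simp add: Y_G)
  qed
  have E3: "(1 - fps_X) * Fs 3 = fps_X^5 * Fs 2"
  proof -
    have "(1 - fps_X) * Fs 3 = ((1 - fps_X) * G 5) * Fs 2"
      by (subst E3') (simp add: algebra_simps)
    then show ?thesis by (simp add: Y_G)
  qed
  have E4: "(1 - fps_X) * Fs 4 = fps_X^4 * Fs 3"
  proof -
    have "(1 - fps_X) * Fs 4 = ((1 - fps_X) * G 4) * Fs 3"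
      by (subst E4') (simp add: algebra_simps)
    then show ?thesis by (simp add: Y_G)
  qed
  show ?thesis unfolding A_eq by (rule ring_id[OF E0 E1 E2 E3 E4])
qed

lemma gf:
  "Abs_fps (\<lambda>n. real (a34543 n)) =
           - (1 - 4*fps_X + 6*fps_X^2 - 4*fps_X^3 + fps_X^4 + fps_X^16 + fps_X^13 - fps_X^14
              + fps_X^9 - 2*fps_X^10 + fps_X^11 + fps_X^5 - 3*fps_X^6 + 3*fps_X^7 - fps_X^8)
             / (fps_X^18 + fps_X^17 - fps_X^16 + 2*fps_X^14 - fps_X^13 - 2*fps_X^11 + 3*fps_X^10
              - fps_X^9 + 2*fps_X^8 - 5*fps_X^7 + 4*fps_X^6 - fps_X^5 - 2*fps_X^4 + 7*fps_X^3
              - 9*fps_X^2 + 5*fps_X - 1)" (is "?A = ?N / ?D")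
proof -
  have D0: "?D $ 0 \<noteq> 0" by simp
  have "?N / ?D = ?N * inverse ?D" by (rule fps_divide_unit[OF D0])
  also have "\<dots> = ?A * ?D * inverse ?D" using main_fps by simp
  also have "\<dots> = ?A" using inverse_mult_eq_1'[OF D0] by (simp add: mult.assoc)
  finally show ?thesis by simp
qed



abbreviation Dfps :: "real fps" where "Dfps \<equiv> (fps_X^18 + fps_X^17 - fps_X^16 + 2*fps_X^14 - fps_X^13 - 2*fps_X^11 + 3*fps_X^10
              - fps_X^9 + 2*fps_X^8 - 5*fps_X^7 + 4*fps_X^6 - fps_X^5 - 2*fps_X^4 + 7*fps_X^3
              - 9*fps_X^2 + 5*fps_X - 1)"
abbreviation Nfps :: "real fps" where "Nfps \<equiv> (1 - 4*fps_X + 6*fps_X^2 - 4*fps_X^3 + fps_X^4 + fps_X^16 + fps_X^13 - fps_X^14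
              + fps_X^9 - 2*fps_X^10 + fps_X^11 + fps_X^5 - 3*fps_X^6 + 3*fps_X^7 - fps_X^8)"

abbreviation "aa n \<equiv> real (a34543 n)"

lemma coeffeq: "(Dfps * Abs_fps (\<lambda>n. aa n)) $ n = - (Nfps $ n)"
  using main_fps by (simp add: mult.commute)

lemma numeral_fps_mult_nth: "((numeral k :: real fps) * f) $ n = numeral k * f $ n"
  by (simp add: numeral_fps_const)

definition sh :: "nat \<Rightarrow> nat \<Rightarrow> real" where "sh k n = (if n < k then 0 else aa (n - k))"
definition ncf :: "nat \<Rightarrow> real" where "ncf n = (if n = 0 then 1 else if n = 1 then -4 else if n = 2 then 6 else if n = 3 then -4 else if n = 4 then 1 else if n = 5 then 1 else if n = 6 then -3 else if n = 7 then 3 else if n = 8 then -1 else if n = 9 then 1 else if n = 10 then -2 else if n = 11 then 1 else if n = 13 then 1 else if n = 14 then -1 else if n = 16 then 1 else 0)"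

lemma rec_all: "aa n = ncf n + 5 * sh 1 n - 9 * sh 2 n + 7 * sh 3 n - 2 * sh 4 n - sh 5 n + 4 * sh 6 n - 5 * sh 7 n + 2 * sh 8 n - sh 9 n + 3 * sh 10 n - 2 * sh 11 n - sh 13 n + 2 * sh 14 n - sh 16 n + sh 17 n + sh 18 n"
proof -
  have shX: "\<And>k. (fps_X^k * Abs_fps (\<lambda>n. aa n)) $ n = sh k n"
    by (simp add: fps_X_power_mult_nth sh_def)
  have shX1: "(fps_X * Abs_fps (\<lambda>n. aa n)) $ n = sh (Suc 0) n"
    using shX[of 1] by simp
  have Nn: "Nfps $ n = ncf n"
    by (simp add: ncf_def fps_numeral_nth)
  have c: "(Dfps * Abs_fps (\<lambda>n. aa n)) $ n = - ncf n" using coeffeq[of n] unfolding Nn .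
    show ?thesis
    using c by (simp add: ring_distribs mult.assoc numeral_fps_mult_nth shX shX1 del: fps_X_mult_nth)
qed

lemma rec18: "18 \<le> n \<Longrightarrow> aa n = 5 * aa (n - 1) - 9 * aa (n - 2) + 7 * aa (n - 3) - 2 * aa (n - 4) - aa (n - 5) + 4 * aa (n - 6) - 5 * aa (n - 7) + 2 * aa (n - 8) - aa (n - 9) + 3 * aa (n - 10) - 2 * aa (n - 11) - aa (n - 13) + 2 * aa (n - 14) - aa (n - 16) + aa (n - 17) + aa (n - 18)"
proof -
  assume n: "18 \<le> n"
  have h1: "\<And>k. k \<le> 18 \<Longrightarrow> sh k n = aa (n - k)" using n by (simp add: sh_def)
  have h2: "ncf n = 0" using n by (simp add: ncf_def)
  show ?thesis using rec_all[of n] by (simp add: h1 h2)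
qed

lemma v0: "a34543 0 = 1"
proof -
  have "aa 0 = 1" using rec_all[of 0] by (simp add: sh_def ncf_def )
  then show ?thesis by linarith
qed
lemma v1: "a34543 1 = 1"
proof -
  have "aa 1 = 1" using rec_all[of 1] by (simp add: sh_def ncf_def v0)
  then show ?thesis by linarith
qed
lemma v1s: "a34543 (Suc 0) = 1" using v1 by simp

lemma v2: "a34543 2 = 2"
proof -
  have "aa 2 = 2" using rec_all[of 2] by (simp add: sh_def ncf_def v0 v1 v1s)
  then show ?thesis by linarith
qed
lemma v3: "a34543 3 = 4"
proof -
  have "aa 3 = 4" using rec_all[of 3] by (simp add: sh_def ncf_def v0 v1 v1s v2)
  then show ?thesis by linarith
qed
lemma v4: "a34543 4 = 8"
proof -
  have "aa 4 = 8" using rec_all[of 4] by (simp add: sh_def ncf_def v0 v1 v1s v2 v3)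
  then show ?thesis by linarith
qed
lemma v5: "a34543 5 = 16"
proof -
  have "aa 5 = 16" using rec_all[of 5] by (simp add: sh_def ncf_def v0 v1 v1s v2 v3 v4)
  then show ?thesis by linarith
qed
lemma v6: "a34543 6 = 32"
proof -
  have "aa 6 = 32" using rec_all[of 6] by (simp add: sh_def ncf_def v0 v1 v1s v2 v3 v4 v5)
  then show ?thesis by linarith
qed
lemma v7: "a34543 7 = 64"
proof -
  have "aa 7 = 64" using rec_all[of 7] by (simp add: sh_def ncf_def v0 v1 v1s v2 v3 v4 v5 v6)
  then show ?thesis by linarith
qed
lemma v8: "a34543 8 = 128"
proof -
  have "aa 8 = 128" using rec_all[of 8] by (simp add: sh_def ncf_def v0 v1 v1s v2 v3 v4 v5 v6 v7)
  then show ?thesis by linarith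
qed
lemma v9: "a34543 9 = 256"
proof -
  have "aa 9 = 256" using rec_all[of 9] by (simp add: sh_def ncf_def v0 v1 v1s v2 v3 v4 v5 v6 v7 v8)
  then show ?thesis by linarith
qed
lemma v10: "a34543 10 = 512"
proof -
  have "aa 10 = 512" using rec_all[of 10] by (simp add: sh_def ncf_def v0 v1 v1s v2 v3 v4 v5 v6 v7 v8 v9)
  then show ?thesis by linarith
qed
lemma v11: "a34543 11 = 1024"
proof -
  have "aa 11 = 1024" using rec_all[of 11] by (simp add: sh_def ncf_def v0 v1 v1s v2 v3 v4 v5 v6 v7 v8 v9 v10)
  then show ?thesis by linarith
qed
lemma v12: "a34543 12 = 2048"
proof -
  have "aa 12 = 2048" using rec_all[of 12] by (simp add: sh_def ncf_def v0 v1 v1s v2 v3 v4 v5 v6 v7 v8 v9 v10 v11)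
  then show ?thesis by linarith
qed
lemma v13: "a34543 13 = 4096"
proof -
  have "aa 13 = 4096" using rec_all[of 13] by (simp add: sh_def ncf_def v0 v1 v1s v2 v3 v4 v5 v6 v7 v8 v9 v10 v11 v12)
  then show ?thesis by linarith
qed
lemma v14: "a34543 14 = 8192"
proof -
  have "aa 14 = 8192" using rec_all[of 14] by (simp add: sh_def ncf_def v0 v1 v1s v2 v3 v4 v5 v6 v7 v8 v9 v10 v11 v12 v13)
  then show ?thesis by linarith
qed
lemma v15: "a34543 15 = 16384"
proof -
  have "aa 15 = 16384" using rec_all[of 15] by (simp add: sh_def ncf_def v0 v1 v1s v2 v3 v4 v5 v6 v7 v8 v9 v10 v11 v12 v13 v14)
  then show ?thesis by linarith
qed
lemma v16: "a34543 16 = 32768"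
proof -
  have "aa 16 = 32768" using rec_all[of 16] by (simp add: sh_def ncf_def v0 v1 v1s v2 v3 v4 v5 v6 v7 v8 v9 v10 v11 v12 v13 v14 v15)
  then show ?thesis by linarith
qed
lemma v17: "a34543 17 = 65536"
proof -
  have "aa 17 = 65536" using rec_all[of 17] by (simp add: sh_def ncf_def v0 v1 v1s v2 v3 v4 v5 v6 v7 v8 v9 v10 v11 v12 v13 v14 v15 v16)
  then show ?thesis by linarith
qed
lemma v18: "a34543 18 = 131072"
proof -
  have "aa 18 = 131072" using rec_all[of 18] by (simp add: sh_def ncf_def v0 v1 v1s v2 v3 v4 v5 v6 v7 v8 v9 v10 v11 v12 v13 v14 v15 v16 v17)
  then show ?thesis by linarith
qed
lemma v19: "a34543 19 = 262143"
proof -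
  have "aa 19 = 262143" using rec_all[of 19] by (simp add: sh_def ncf_def v1 v1s v2 v3 v4 v5 v6 v7 v8 v9 v10 v11 v12 v13 v14 v15 v16 v17 v18)
  then show ?thesis by linarith
qed
lemma v20: "a34543 20 = 524281"
proof -
  have "aa 20 = 524281" using rec_all[of 20] by (simp add: sh_def ncf_def v2 v3 v4 v5 v6 v7 v8 v9 v10 v11 v12 v13 v14 v15 v16 v17 v18 v19)
  then show ?thesis by linarith
qed
lemma v21: "a34543 21 = 1048546"
proof -
  have "aa 21 = 1048546" using rec_all[of 21] by (simp add: sh_def ncf_def v3 v4 v5 v6 v7 v8 v9 v10 v11 v12 v13 v14 v15 v16 v17 v18 v19 v20)
  then show ?thesis by linarith
qed
lemma v22: "a34543 22 = 2097050"
proof -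
  have "aa 22 = 2097050" using rec_all[of 22] by (simp add: sh_def ncf_def v4 v5 v6 v7 v8 v9 v10 v11 v12 v13 v14 v15 v16 v17 v18 v19 v20 v21)
  then show ?thesis by linarith
qed
lemma v23: "a34543 23 = 4194001"
proof -
  have "aa 23 = 4194001" using rec_all[of 23] by (simp add: sh_def ncf_def v5 v6 v7 v8 v9 v10 v11 v12 v13 v14 v15 v16 v17 v18 v19 v20 v21 v22)
  then show ?thesis by linarith
qed
lemma v24: "a34543 24 = 8387784"
proof -
  have "aa 24 = 8387784" using rec_all[of 24] by (simp add: sh_def ncf_def v6 v7 v8 v9 v10 v11 v12 v13 v14 v15 v16 v17 v18 v19 v20 v21 v22 v23)
  then show ?thesis by linarith
qed
lemma v25: "a34543 25 = 16775108"
proof -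
  have "aa 25 = 16775108" using rec_all[of 25] by (simp add: sh_def ncf_def v7 v8 v9 v10 v11 v12 v13 v14 v15 v16 v17 v18 v19 v20 v21 v22 v23 v24)
  then show ?thesis by linarith
qed
lemma v26: "a34543 26 = 33549270"
proof -
  have "aa 26 = 33549270" using rec_all[of 26] by (simp add: sh_def ncf_def v8 v9 v10 v11 v12 v13 v14 v15 v16 v17 v18 v19 v20 v21 v22 v23 v24 v25)
  then show ?thesis by linarith
qed
lemma v27: "a34543 27 = 67096623"
proof -
  have "aa 27 = 67096623" using rec_all[of 27] by (simp add: sh_def ncf_def v9 v10 v11 v12 v13 v14 v15 v16 v17 v18 v19 v20 v21 v22 v23 v24 v25 v26)
  then show ?thesis by linarith
qed
lemma v28: "a34543 28 = 134189393"
proof -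
  have "aa 28 = 134189393" using rec_all[of 28] by (simp add: sh_def ncf_def v10 v11 v12 v13 v14 v15 v16 v17 v18 v19 v20 v21 v22 v23 v24 v25 v26 v27)
  then show ?thesis by linarith
qed
lemma v29: "a34543 29 = 268371074"
proof -
  have "aa 29 = 268371074" using rec_all[of 29] by (simp add: sh_def ncf_def v11 v12 v13 v14 v15 v16 v17 v18 v19 v20 v21 v22 v23 v24 v25 v26 v27 v28)
  then show ?thesis by linarith
qed
lemma v30: "a34543 30 = 536726740"
proof -
  have "aa 30 = 536726740" using rec_all[of 30] by (simp add: sh_def ncf_def v12 v13 v14 v15 v16 v17 v18 v19 v20 v21 v22 v23 v24 v25 v26 v27 v28 v29)
  then show ?thesis by linarith
qed

lemma upt31: "[0..<31] = ([0, 1, 2, 3, 4, 5, 6, 7, 8, 9, 10, 11, 12, 13, 14, 15, 16, 17, 18, 19, 20, 21, 22, 23, 24, 25, 26, 27, 28, 29, 30] :: nat list)"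
  by code_simp

lemma values31: "map a34543 [0..<31] =
           [1, 1, 2, 4, 8, 16, 32, 64, 128, 256, 512, 1024, 2048, 4096, 8192, 16384, 32768,
            65536, 131072, 262143, 524281, 1048546, 2097050, 4194001, 8387784, 16775108,
            33549270, 67096623, 134189393, 268371074, 536726740]"
  unfolding upt31 by (simp add: v1s v0 v1 v2 v3 v4 v5 v6 v7 v8 v9 v10 v11 v12 v13 v14 v15 v16 v17 v18 v19 v20 v21 v22 v23 v24 v25 v26 v27 v28 v29 v30)


fun pev :: "int list \<Rightarrow> real \<Rightarrow> real" where
  "pev [] x = 0" | "pev (c#cs) x = of_int c + x * pev cs x"

fun absm :: "real \<Rightarrow> int list \<Rightarrow> real" where
  "absm m [] = 0" | "absm m (c#cs) = of_int \<bar>c\<bar> + m * absm m cs"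

fun lipm :: "real \<Rightarrow> int list \<Rightarrow> real" where
  "lipm m [] = 0" | "lipm m (c#cs) = absm m cs + m * lipm m cs"

fun hev :: "int list \<Rightarrow> int \<Rightarrow> int \<Rightarrow> int" where
  "hev [] p q = 0" | "hev (c#cs) p q = c * q ^ length cs + p * hev cs p q"

lemma absm_nonneg: "0 \<le> m \<Longrightarrow> 0 \<le> absm m cs"
  by (induction cs) auto

lemma pev_bound: "\<bar>x\<bar> \<le> m \<Longrightarrow> \<bar>pev cs x\<bar> \<le> absm m cs"
proof (induction cs)
  case (Cons c cs)
  have "\<bar>pev (c#cs) x\<bar> \<le> \<bar>of_int c\<bar> + \<bar>x\<bar> * \<bar>pev cs x\<bar>"
    by (simp add: abs_mult[symmetric])
  also have "\<dots> \<le> \<bar>of_int c\<bar> + m * absm m cs"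
    using Cons by (intro add_left_mono mult_mono) auto
  finally show ?case by simp
qed simp

lemma pev_lip: "\<bar>x\<bar> \<le> m \<Longrightarrow> \<bar>y\<bar> \<le> m \<Longrightarrow> \<bar>pev cs x - pev cs y\<bar> \<le> lipm m cs * \<bar>x - y\<bar>"
proof (induction cs)
  case (Cons c cs)
  have "pev (c#cs) x - pev (c#cs) y = (x - y) * pev cs x + y * (pev cs x - pev cs y)"
    by (simp add: algebra_simps)
  then have "\<bar>pev (c#cs) x - pev (c#cs) y\<bar> \<le> \<bar>x - y\<bar> * \<bar>pev cs x\<bar> + \<bar>y\<bar> * \<bar>pev cs x - pev cs y\<bar>"
    by (metis abs_mult abs_triangle_ineq)
  also have "\<dots> \<le> \<bar>x - y\<bar> * absm m cs + m * (lipm m cs * \<bar>x - y\<bar>)"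
    using Cons pev_bound[of x m cs] by (intro add_mono mult_mono) auto
  finally show ?case by (simp add: algebra_simps)
qed simp

lemma pev_cont: "isCont (pev cs) x"
  by (induction cs) (auto intro!: continuous_intros)

lemma hev_pev: "q \<noteq> 0 \<Longrightarrow> real_of_int (hev cs p q) * of_int q = of_int q ^ length cs * pev cs (of_int p / of_int q)"
  by (induction cs) (auto simp: field_simps)

lemma hev_eq: "0 < q \<Longrightarrow> pev cs (of_int p / of_int q) = real_of_int (hev cs p q) * of_int q / of_int q ^ length cs"
  using hev_pev[of q cs p] by (simp add: field_simps)

lemma hev_pos: "0 < q \<Longrightarrow> 0 < hev cs p q \<Longrightarrow> 0 < pev cs (of_int p / of_int q)"
  by (simp add: hev_eq)

lemma hev_neg: "0 < q \<Longrightarrow> hev cs p q < 0 \<Longrightarrow> pev cs (of_int p / of_int q) < 0"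
  by (simp add: hev_eq divide_neg_pos mult_neg_pos)

definition dlist :: "int list" where "dlist = [-1,5,-9,7,-2,-1,4,-5,2,-1,3,-2,0,-1,2,0,-1,1,1]"
definition Nlist :: "int list" where "Nlist = [1, -4, 6, -4, 1, 1, -3, 3, -1, 1, -2, 1, 0, 1, -1, 0, 1]"
definition Mlist :: "int list" where "Mlist = [0, 5, -18, 21, -8, -5, 24, -35, 16, -9, 30, -22, 0, -13, 28, 0, -16, 17, 18]"

definition rlo :: real where "rlo = 562965996707165 / 2^50"
definition rhi :: real where "rhi = 562965996707166 / 2^50"

lemma D_lo: "pev dlist rlo < 0"
proof -
  have "hev dlist 562965996707165 (2^50) < 0" by (simp add: dlist_def)
  from hev_neg[OF _ this] show ?thesis by (simp add: rlo_def)
qed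

lemma D_hi: "pev dlist rhi > 0"
proof -
  have "hev dlist 562965996707166 (2^50) > 0" by (simp add: dlist_def)
  from hev_pos[OF _ this] show ?thesis by (simp add: rhi_def)
qed


lemma root_exists: "\<exists>\<rho>. rlo \<le> \<rho> \<and> \<rho> \<le> rhi \<and> pev dlist \<rho> = 0"
proof -
  have "rlo \<le> rhi" by (simp add: rlo_def rhi_def)
  moreover have "\<forall>x. rlo \<le> x \<and> x \<le> rhi \<longrightarrow> isCont (pev dlist) x" by (simp add: pev_cont)
  ultimately obtain x where "x \<ge> rlo" "x \<le> rhi" "pev dlist x = 0"
    using IVT[of "pev dlist" rlo 0 rhi] D_lo D_hi by force
  then show ?thesis by blast
qed

lemma N_lo: "669640487389393 / 10^16 \<le> pev Nlist rlo \<and> pev Nlist rlo \<le> 669640487389394 / 10^16"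
proof -
  have hv: "hev Nlist 562965996707165 (2^50) = 446517243475317485790241546907846618283050840497681708412788619388333850529811542813704915009308330881244903189793383782926483325591970595687909936919687935162864567119072791746786981462591394509350621450025233169071792657626573674224829761"
    by (simp add: Nlist_def)
  have "pev Nlist rlo = real_of_int (hev Nlist 562965996707165 (2^50)) * 2^50 / (2^50) ^ length Nlist"
    using hev_eq[of "2^50" Nlist 562965996707165] by (simp add: rlo_def)
  also have "\<dots> = 446517243475317485790241546907846618283050840497681708412788619388333850529811542813704915009308330881244903189793383782926483325591970595687909936919687935162864567119072791746786981462591394509350621450025233169071792657626573674224829761 / 2^800"
    unfolding hv by (simp add: Nlist_def power_mult[symmetric])
  finally show ?thesis by simp
qed

lemma M_lo: "1338496575873921 / 10^16 \<le> pev Mlist rlo \<and> pev Mlist rlo \<le> 1338496575873922 / 10^16"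
proof -
  have hv: "hev Mlist 562965996707165 (2^50) = 1131392673564811011052093212710577992916843283097121611124185513592379249416027716937059059275868510672960941196938789077959581383983635644274847755726301812772400246446837789841104081841436868581204388932947616850460937613873492729407246381875193519905346228415672473250"
    by (simp add: Mlist_def)
  have "pev Mlist rlo = real_of_int (hev Mlist 562965996707165 (2^50)) * 2^50 / (2^50) ^ length Mlist"
    using hev_eq[of "2^50" Mlist 562965996707165] by (simp add: rlo_def)
  also have "\<dots> = 1131392673564811011052093212710577992916843283097121611124185513592379249416027716937059059275868510672960941196938789077959581383983635644274847755726301812772400246446837789841104081841436868581204388932947616850460937613873492729407246381875193519905346228415672473250 / 2^900"
    unfolding hv by (simp add: Mlist_def power_mult[symmetric])
  finally show ?thesis by simp
qed


lemma shift_rec: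
  fixes \<epsilon> dd e :: "nat \<Rightarrow> real"
  assumes "dd 0 = \<epsilon> 0" "\<And>i. i \<le> L \<Longrightarrow> dd (Suc i) = \<epsilon> (Suc i) - r * \<epsilon> i" "\<epsilon> (Suc L) = 0"
  shows "(\<Sum>j\<le>Suc L. dd j * e (m - j)) = (\<Sum>j\<le>L. \<epsilon> j * e (m - j)) - r * (\<Sum>j\<le>L. \<epsilon> j * e (m - Suc j))"
proof -
  have "(\<Sum>j\<le>Suc L. dd j * e (m - j)) = dd 0 * e m + (\<Sum>i\<le>L. dd (Suc i) * e (m - Suc i))"
    unfolding sum.atMost_Suc_shift by simp
  also have "\<dots> = \<epsilon> 0 * e m + (\<Sum>i\<le>L. (\<epsilon> (Suc i) - r * \<epsilon> i) * e (m - Suc i))"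
    using assms(1,2) by simp
  also have "\<dots> = (\<epsilon> 0 * e m + (\<Sum>i\<le>L. \<epsilon> (Suc i) * e (m - Suc i))) - r * (\<Sum>j\<le>L. \<epsilon> j * e (m - Suc j))"
    by (simp add: left_diff_distrib sum_subtractf sum_distrib_left mult.assoc)
  also have "\<epsilon> 0 * e m + (\<Sum>i\<le>L. \<epsilon> (Suc i) * e (m - Suc i)) = (\<Sum>j\<le>Suc L. \<epsilon> j * e (m - j))"
    unfolding sum.atMost_Suc_shift by simp
  also have "\<dots> = (\<Sum>j\<le>L. \<epsilon> j * e (m - j))"
    using assms(3) by simp
  finally show ?thesis .
qed

lemma g_zero:
  fixes \<epsilon> dd e :: "nat \<Rightarrow> real"
  assumes "dd 0 = \<epsilon> 0" "\<And>i. i \<le> L \<Longrightarrow> dd (Suc i) = \<epsilon> (Suc i) - r * \<epsilon> i" "\<epsilon> (Suc L) = 0"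
    and rec: "\<And>m. Suc L \<le> m \<Longrightarrow> (\<Sum>j\<le>Suc L. dd j * e (m - j)) = 0"
    and g0: "(\<Sum>j\<le>L. \<epsilon> j * e (L - j)) = 0"
    and n: "L \<le> n"
  shows "(\<Sum>j\<le>L. \<epsilon> j * e (n - j)) = 0"
  using n
proof (induction n rule: dec_induct)
  case base
  then show ?case using g0 .
next
  case (step n)
  have "0 = (\<Sum>j\<le>Suc L. dd j * e (Suc n - j))" using rec[of "Suc n"] step by simp
  also have "\<dots> = (\<Sum>j\<le>L. \<epsilon> j * e (Suc n - j)) - r * (\<Sum>j\<le>L. \<epsilon> j * e (Suc n - Suc j))"
    by (rule shift_rec[OF assms(1-3)])
  also have "(\<Sum>j\<le>L. \<epsilon> j * e (Suc n - Suc j)) = 0" using step by simp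
  finally show ?case by simp
qed

lemma conv_inner:
  fixes \<epsilon> e :: "nat \<Rightarrow> real"
  assumes "\<And>i. L < i \<Longrightarrow> \<epsilon> i = 0" "j \<le> J"
  shows "(\<Sum>k\<le>L+J. (if j \<le> k then \<epsilon> (k - j) * e (n - k) else 0)) = (\<Sum>i\<le>L. \<epsilon> i * e (n - j - i))"
proof -
  have "(\<Sum>k\<le>L+J. (if j \<le> k then \<epsilon> (k - j) * e (n - k) else 0)) = (\<Sum>k\<in>{j..L+J}. \<epsilon> (k - j) * e (n - k))"
    by (rule sum.mono_neutral_cong_right) auto
  also have "\<dots> = (\<Sum>i\<in>{0..L+J-j}. \<epsilon> i * e (n - j - i))"
  proof -
    have "(\<Sum>k\<in>{0+j..L+J-j+j}. \<epsilon> (k - j) * e (n - k)) = (\<Sum>i\<in>{0..L+J-j}. \<epsilon> (i + j - j) * e (n - (i + j)))"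
      by (rule sum.shift_bounds_cl_nat_ivl)
    moreover have "L+J-j+j = L+J" using assms(2) by simp
    ultimately show ?thesis by (simp add: add.commute diff_diff_left)
  qed
  also have "\<dots> = (\<Sum>i\<le>L. \<epsilon> i * e (n - j - i))"
    using assms by (intro sum.mono_neutral_right) auto
  finally show ?thesis .
qed

lemma conv_rec:
  fixes \<epsilon> e s :: "nat \<Rightarrow> real"
  assumes "\<And>i. L < i \<Longrightarrow> \<epsilon> i = 0"
    and g: "\<And>n. L \<le> n \<Longrightarrow> (\<Sum>i\<le>L. \<epsilon> i * e (n - i)) = 0"
    and n: "L + J \<le> n"
  shows "(\<Sum>k\<le>L+J. (\<Sum>j\<le>J. if j \<le> k then s j * \<epsilon> (k - j) else 0) * e (n - k)) = 0"
proof -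
  have "(\<Sum>k\<le>L+J. (\<Sum>j\<le>J. if j \<le> k then s j * \<epsilon> (k - j) else 0) * e (n - k))
      = (\<Sum>k\<le>L+J. \<Sum>j\<le>J. s j * (if j \<le> k then \<epsilon> (k - j) * e (n - k) else 0))"
    by (auto simp: sum_distrib_right intro!: sum.cong)
  also have "\<dots> = (\<Sum>j\<le>J. s j * (\<Sum>k\<le>L+J. (if j \<le> k then \<epsilon> (k - j) * e (n - k) else 0)))"
    by (simp add: sum.swap[of _ "{..L+J}"] sum_distrib_left)
  also have "\<dots> = (\<Sum>j\<le>J. s j * (\<Sum>i\<le>L. \<epsilon> i * e (n - j - i)))"
  proof (intro sum.cong refl)
    fix j assume "j \<in> {..J}"
    then have "(\<Sum>k\<le>L+J. (if j \<le> k then \<epsilon> (k - j) * e (n - k) else 0)) = (\<Sum>i\<le>L. \<epsilon> i * e (n - j - i))"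
      by (intro conv_inner[of L \<epsilon> j J e n]) (use assms(1) in auto)
    then show "s j * (\<Sum>k\<le>L+J. (if j \<le> k then \<epsilon> (k - j) * e (n - k) else 0)) = s j * (\<Sum>i\<le>L. \<epsilon> i * e (n - j - i))"
      by simp
  qed
  also have "\<dots> = 0"
  proof (intro sum.neutral ballI)
    fix j assume "j \<in> {..J}"
    then have "L \<le> n - j" using n by auto
    then have "(\<Sum>i\<le>L. \<epsilon> i * e (n - j - i)) = 0" by (rule g)
    then show "s j * (\<Sum>i\<le>L. \<epsilon> i * e (n - j - i)) = 0" by simp
  qed
  finally show ?thesis .
qed

lemma growth_bound:
  fixes e \<tau> :: "nat \<Rightarrow> real"
  assumes t0: "\<tau> 0 = 1" and rec: "\<And>n. N \<le> n \<Longrightarrow> (\<Sum>k\<le>M. \<tau> k * e (n - k)) = 0"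
    and NM: "M \<le> N" and sig: "0 < \<sigma>" and S: "(\<Sum>k\<in>{1..M}. \<bar>\<tau> k\<bar> * \<sigma> ^ k) \<le> 1"
  shows "\<exists>K. \<forall>n. \<bar>e n\<bar> * \<sigma> ^ n \<le> K"
proof -
  define K where "K = (\<Sum>n<N. \<bar>e n\<bar> * \<sigma> ^ n)"
  have K0: "0 \<le> K" unfolding K_def using sig by (intro sum_nonneg) auto
  have "\<bar>e n\<bar> * \<sigma> ^ n \<le> K" for n
  proof (induction n rule: less_induct)
    case (less n)
    show ?case
    proof (cases "n < N")
      case True
      then show ?thesis unfolding K_def using sig
        by (intro member_le_sum) auto
    next
      case False
      then have nN: "N \<le> n" by simp
      have "(\<Sum>k\<le>M. \<tau> k * e (n - k)) = \<tau> 0 * e n + (\<Sum>k\<in>{1..M}. \<tau> k * e (n - k))"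
        by (simp add: atMost_atLeast0 sum.atLeast_Suc_atMost)
      then have en: "e n = - (\<Sum>k\<in>{1..M}. \<tau> k * e (n - k))" using rec[OF nN] t0 by simp
      have "\<bar>e n\<bar> * \<sigma> ^ n \<le> (\<Sum>k\<in>{1..M}. \<bar>\<tau> k * e (n - k)\<bar>) * \<sigma> ^ n"
        unfolding en abs_minus_cancel using sig by (intro mult_right_mono sum_abs) auto
      also have "\<dots> = (\<Sum>k\<in>{1..M}. (\<bar>\<tau> k\<bar> * \<sigma> ^ k) * (\<bar>e (n - k)\<bar> * \<sigma> ^ (n - k)))"
        unfolding sum_distrib_right
      proof (intro sum.cong refl)
        fix k assume "k \<in> {1..M}"
        then have "k \<le> n" using NM nN by auto
        then have "\<sigma> ^ n = \<sigma> ^ k * \<sigma> ^ (n - k)" by (simp add: power_add[symmetric])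
        then show "\<bar>\<tau> k * e (n - k)\<bar> * \<sigma> ^ n = \<bar>\<tau> k\<bar> * \<sigma> ^ k * (\<bar>e (n - k)\<bar> * \<sigma> ^ (n - k))"
          by (simp add: abs_mult)
      qed
      also have "\<dots> \<le> (\<Sum>k\<in>{1..M}. (\<bar>\<tau> k\<bar> * \<sigma> ^ k) * K)"
      proof (intro sum_mono mult_left_mono)
        fix k assume k: "k \<in> {1..M}"
        then have "n - k < n" using NM nN by auto
        then show "\<bar>e (n - k)\<bar> * \<sigma> ^ (n - k) \<le> K" by (rule less.IH)
      qed (use sig in auto)
      also have "\<dots> = (\<Sum>k\<in>{1..M}. \<bar>\<tau> k\<bar> * \<sigma> ^ k) * K" by (simp add: sum_distrib_right)
      also have "\<dots> \<le> 1 * K" using S K0 by (intro mult_right_mono) auto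
      finally show ?thesis by simp
    qed
  qed
  then show ?thesis by blast
qed


definition dd :: "nat \<Rightarrow> real" where "dd i = (if i < 19 then of_int (dlist ! i) else 0)"

lemma expand18: "(\<Sum>j\<le>18. dd j * f j) = - f 0 + 5 * f 1 - 9 * f 2 + 7 * f 3 - 2 * f 4 - f 5 + 4 * f 6 - 5 * f 7 + 2 * f 8 - f 9 + 3 * f 10 - 2 * f 11 - f 13 + 2 * f 14 - f 16 + f 17 + f 18"
  by (simp add: dd_def dlist_def eval_nat_numeral atMost_Suc algebra_simps)

lemma ncf_pev: "(\<Sum>k\<le>17. ncf k * x^k) = pev Nlist x"
  by (simp add: ncf_def Nlist_def eval_nat_numeral atMost_Suc algebra_simps)

lemma pev_sum: "pev cs x = (\<Sum>j<length cs. of_int (cs ! j) * x ^ j)"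
proof (induction cs)
  case (Cons a cs)
  have "(\<Sum>j<length (a#cs). of_int ((a#cs) ! j) * x ^ j) = of_int a + (\<Sum>j<length cs. of_int (cs ! j) * x ^ Suc j)"
    unfolding length_Cons sum.lessThan_Suc_shift by simp
  also have "\<dots> = of_int a + x * (\<Sum>j<length cs. of_int (cs ! j) * x ^ j)"
    by (simp add: sum_distrib_left algebra_simps)
  finally show ?case using Cons by simp
qed simp

lemma dd_pev: "(\<Sum>j\<le>18. dd j * x^j) = pev dlist x"
proof -
  have l: "length dlist = 19" by (simp add: dlist_def)
  have "{..18::nat} = {..<19}" by auto
  then show ?thesis unfolding pev_sum l by (intro sum.cong) (auto simp: dd_def)
qed

lemma lt17: "(k::nat) < 17 \<Longrightarrow> k = 0 \<or> k = 1 \<or> k = 2 \<or> k = 3 \<or> k = 4 \<or> k = 5 \<or> k = 6 \<or> k = 7 \<or> k = 8 \<or> k = 9 \<or> k = 10 \<or> k = 11 \<or> k = 12 \<or> k = 13 \<or> k = 14 \<or> k = 15 \<or> k = 16"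
  by presburger

definition el :: "nat \<Rightarrow> int list" where
  "el i = (if i = 0 then [-1] else 0 # map uminus (drop (Suc i) dlist))"

definition eps :: "real \<Rightarrow> nat \<Rightarrow> real" where "eps \<rho> i = pev (el i) \<rho>"

lemma pev_uminus: "pev (map uminus cs) x = - pev cs x" by (induction cs) auto

lemma length_dlist: "length dlist = 19" by (simp add: dlist_def)

lemma eps_zero: "17 < i \<Longrightarrow> eps \<rho> i = 0"
proof (cases i)
  case (Suc k)
  assume "17 < i"
  then have "drop (Suc (Suc k)) dlist = []" using length_dlist Suc by simp
  then show ?thesis by (simp add: eps_def el_def Suc)
qed simp

lemma eps_step:
  assumes "k \<le> 16"
  shows "eps \<rho> (Suc k) = \<rho> * (eps \<rho> (Suc (Suc k)) - dd (Suc (Suc k)))"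
proof -
  have d: "drop (Suc (Suc k)) dlist = dlist ! Suc (Suc k) # drop (Suc (Suc (Suc k))) dlist"
    using assms length_dlist by (simp add: Cons_nth_drop_Suc)
  have "dd (Suc (Suc k)) = of_int (dlist ! Suc (Suc k))" using assms by (simp add: dd_def)
  then show ?thesis by (simp add: eps_def el_def d pev_uminus algebra_simps)
qed

lemma eps_rel:
  assumes D0: "pev dlist \<rho> = 0" and r0: "\<rho> \<noteq> 0" and i: "i \<le> 17"
  shows "dd (Suc i) = eps \<rho> (Suc i) - (1/\<rho>) * eps \<rho> i"
proof (cases i)
  case 0
  have h: "dlist = -1 # 5 # drop 2 dlist" by (simp add: dlist_def)
  have "pev dlist \<rho> = -1 + \<rho> * (5 + \<rho> * pev (drop 2 dlist) \<rho>)" by (subst h) simp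
  moreover have "eps \<rho> 1 = - \<rho> * pev (drop 2 dlist) \<rho>"
    by (simp add: eps_def el_def pev_uminus numeral_2_eq_2)
  moreover have "dd 1 = 5" by (simp add: dd_def dlist_def)
  moreover have "eps \<rho> 0 = -1" by (simp add: eps_def el_def)
  ultimately show ?thesis using D0 r0 0 by (simp add: field_simps)
next
  case (Suc k)
  then have "k \<le> 16" using i by simp
  from eps_step[OF this, of \<rho>] show ?thesis using r0 Suc by (simp add: field_simps)
qed

lemma dd0: "dd 0 = eps \<rho> 0" by (simp add: dd_def dlist_def eps_def el_def)

lemma rec_dd: "(\<Sum>j\<le>18. dd j * sh j n) = - ncf n"
proof -
  have "sh 0 n = aa n" by (simp add: sh_def)
  then show ?thesis unfolding expand18 using rec_all[of n] by simp
qed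

lemma rec_small:
  assumes "n \<le> 18"
  shows "(\<Sum>j\<le>n. dd j * aa (n - j)) = - ncf n"
proof -
  have "(\<Sum>j\<le>18. dd j * sh j n) = (\<Sum>j\<le>n. dd j * sh j n)"
    using assms by (intro sum.mono_neutral_right) (auto simp: sh_def)
  also have "\<dots> = (\<Sum>j\<le>n. dd j * aa (n - j))"
    by (intro sum.cong) (auto simp: sh_def)
  finally show ?thesis using rec_dd[of n] by simp
qed

lemma rec_big:
  assumes "18 \<le> n"
  shows "(\<Sum>j\<le>18. dd j * aa (n - j)) = 0"
proof -
  have "(\<Sum>j\<le>18. dd j * aa (n - j)) = (\<Sum>j\<le>18. dd j * sh j n)"
    using assms by (intro sum.cong) (auto simp: sh_def)
  also have "\<dots> = - ncf n" by (rule rec_dd)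
  also have "ncf n = 0" using assms by (simp add: ncf_def)
  finally show ?thesis by simp
qed

lemma h_closed:
  fixes \<epsilon> dd a Nc :: "nat \<Rightarrow> real"
  assumes e0: "dd 0 = \<epsilon> 0" and es: "\<And>i. i \<le> L \<Longrightarrow> dd (Suc i) = \<epsilon> (Suc i) - r * \<epsilon> i"
    and hr: "\<And>n. n \<le> Suc L \<Longrightarrow> (\<Sum>j\<le>n. dd j * a (n - j)) = - Nc n"
    and n: "n \<le> Suc L"
  shows "(\<Sum>i\<le>n. \<epsilon> i * a (n - i)) = - (\<Sum>k\<le>n. Nc k * r ^ (n - k))"
  using n
proof (induction n)
  case 0
  then show ?case using hr[of 0] e0 by simp
next
  case (Suc n)
  then have nL: "n \<le> L" and IH: "(\<Sum>i\<le>n. \<epsilon> i * a (n - i)) = - (\<Sum>k\<le>n. Nc k * r ^ (n - k))" by auto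
  have "- Nc (Suc n) = (\<Sum>j\<le>Suc n. dd j * a (Suc n - j))" using hr[OF Suc.prems] by simp
  also have "\<dots> = dd 0 * a (Suc n) + (\<Sum>i\<le>n. dd (Suc i) * a (n - i))"
    unfolding sum.atMost_Suc_shift by simp
  also have "\<dots> = \<epsilon> 0 * a (Suc n) + (\<Sum>i\<le>n. (\<epsilon> (Suc i) - r * \<epsilon> i) * a (n - i))"
    using es nL e0 by simp
  also have "\<dots> = (\<epsilon> 0 * a (Suc n) + (\<Sum>i\<le>n. \<epsilon> (Suc i) * a (n - i))) - r * (\<Sum>i\<le>n. \<epsilon> i * a (n - i))"
    by (simp add: left_diff_distrib sum_subtractf sum_distrib_left mult.assoc)
  also have "\<epsilon> 0 * a (Suc n) + (\<Sum>i\<le>n. \<epsilon> (Suc i) * a (n - i)) = (\<Sum>i\<le>Suc n. \<epsilon> i * a (Suc n - i))"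
    unfolding sum.atMost_Suc_shift by simp
  finally have h: "(\<Sum>i\<le>Suc n. \<epsilon> i * a (Suc n - i)) = - Nc (Suc n) + r * (\<Sum>i\<le>n. \<epsilon> i * a (n - i))"
    by simp
  have "(\<Sum>k\<le>Suc n. Nc k * r ^ (Suc n - k)) = (\<Sum>k\<le>n. Nc k * r ^ (Suc n - k)) + Nc (Suc n)"
    by simp
  also have "(\<Sum>k\<le>n. Nc k * r ^ (Suc n - k)) = r * (\<Sum>k\<le>n. Nc k * r ^ (n - k))"
    unfolding sum_distrib_left by (intro sum.cong) (auto simp: Suc_diff_le)
  finally show ?case using h IH by simp
qed

fun padd :: "int list \<Rightarrow> int list \<Rightarrow> int list" where
  "padd [] ys = ys" | "padd xs [] = xs" | "padd (x#xs) (y#ys) = (x+y) # padd xs ys"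

lemma pev_padd: "pev (padd xs ys) x = pev xs x + pev ys x"
  by (induction xs ys rule: padd.induct) (auto simp: algebra_simps)

lemma pev_scale: "pev (map ((*) c) cs) x = of_int c * pev cs x"
  by (induction cs) (auto simp: algebra_simps)

definition Slist :: "int list" where "Slist = [-1,-3,-6,-10,-15,-20,-24,-26,-25,-19,-6]"

definition tlst :: "nat \<Rightarrow> int list" where
  "tlst k = foldr (\<lambda>j acc. padd (if j \<le> k then map ((*) (Slist ! j)) (el (k - j)) else []) acc) [0..<11] []"

lemma pev_foldr: "pev (foldr (\<lambda>j acc. padd (F j) acc) js []) x = (\<Sum>j\<leftarrow>js. pev (F j) x)"
  by (induction js) (auto simp: pev_padd)



lemma upt11: "[0..<11] = [0,1,2,3,4,5,6,7,8,9,10::nat]" by code_simp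
lemma upt28: "[1..<28] = [1,2,3,4,5,6,7,8,9,10,11,12,13,14,15,16,17,18,19,20,21,22,23,24,25,26,27::nat]" by code_simp

lemma pev_tlst: "pev (tlst k) x = (\<Sum>j\<le>10. if j \<le> k then of_int (Slist ! j) * eps x (k - j) else 0)"
proof -
  have "pev (tlst k) x = (\<Sum>j\<leftarrow>[0..<11]. pev (if j \<le> k then map ((*) (Slist ! j)) (el (k - j)) else []) x)"
    unfolding tlst_def by (rule pev_foldr)
  also have "\<dots> = (\<Sum>j\<in>{0..<11}. pev (if j \<le> k then map ((*) (Slist ! j)) (el (k - j)) else []) x)"
    by (simp add: sum_set_upt_conv_sum_list_nat[symmetric])
  also have "{0..<11} = {..10::nat}" by auto
  also have "(\<Sum>j\<le>10. pev (if j \<le> k then map ((*) (Slist ! j)) (el (k - j)) else []) x)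
     = (\<Sum>j\<le>10. if j \<le> k then of_int (Slist ! j) * eps x (k - j) else 0)"
    by (intro sum.cong refl) (simp add: pev_scale eps_def)
  finally show ?thesis .
qed

lemma sum27: "(\<Sum>k\<in>{1..27::nat}. g k) = g 1 + g 2 + g 3 + g 4 + g 5 + g 6 + g 7 + g 8 + g 9 + g 10 + g 11 + g 12 + g 13 + g 14 + g 15 + g 16 + g 17 + g 18 + g 19 + g 20 + g 21 + g 22 + g 23 + g 24 + g 25 + g 26 + g 27"
proof -
  have "{1..27::nat} = set [1..<28]" by auto
  then have "(\<Sum>k\<in>{1..27::nat}. g k) = sum_list (map g [1..<28])"
    by (simp add: sum_set_upt_conv_sum_list_nat del: set_upt)
  then show ?thesis unfolding upt28 by (simp add: add.assoc)
qed

lemma tb1: "(\<bar>pev (tlst 1) (1/2)\<bar> + lipm 1 (tlst 1) * (143/10^7)) * (51/100)^1 \<le> 2040000 / 10^9"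
  by (simp add: tlst_def upt11 el_def Slist_def dlist_def power_divide)

lemma tb2: "(\<bar>pev (tlst 2) (1/2)\<bar> + lipm 1 (tlst 2) * (143/10^7)) * (51/100)^2 \<le> 2340900 / 10^9"
  by (simp add: tlst_def upt11 el_def Slist_def dlist_def power_divide)

lemma tb3: "(\<bar>pev (tlst 3) (1/2)\<bar> + lipm 1 (tlst 3) * (143/10^7)) * (51/100)^3 \<le> 2255067 / 10^9"
  by (simp add: tlst_def upt11 el_def Slist_def dlist_def power_divide)

lemma tb4: "(\<bar>pev (tlst 4) (1/2)\<bar> + lipm 1 (tlst 4) * (143/10^7)) * (51/100)^4 \<le> 1758953 / 10^9"
  by (simp add: tlst_def upt11 el_def Slist_def dlist_def power_divide)

lemma tb5: "(\<bar>pev (tlst 5) (1/2)\<bar> + lipm 1 (tlst 5) * (143/10^7)) * (51/100)^5 \<le> 1345599 / 10^9"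
  by (simp add: tlst_def upt11 el_def Slist_def dlist_def power_divide)

lemma tb6: "(\<bar>pev (tlst 6) (1/2)\<bar> + lipm 1 (tlst 6) * (143/10^7)) * (51/100)^6 \<le> 950200 / 10^9"
  by (simp add: tlst_def upt11 el_def Slist_def dlist_def power_divide)

lemma tb7: "(\<bar>pev (tlst 7) (1/2)\<bar> + lipm 1 (tlst 7) * (143/10^7)) * (51/100)^7 \<le> 619214 / 10^9"
  by (simp add: tlst_def upt11 el_def Slist_def dlist_def power_divide)

lemma tb8: "(\<bar>pev (tlst 8) (1/2)\<bar> + lipm 1 (tlst 8) * (143/10^7)) * (51/100)^8 \<le> 375298 / 10^9"
  by (simp add: tlst_def upt11 el_def Slist_def dlist_def power_divide)

lemma tb9: "(\<bar>pev (tlst 9) (1/2)\<bar> + lipm 1 (tlst 9) * (143/10^7)) * (51/100)^9 \<le> 214744 / 10^9"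
  by (simp add: tlst_def upt11 el_def Slist_def dlist_def power_divide)

lemma tb10: "(\<bar>pev (tlst 10) (1/2)\<bar> + lipm 1 (tlst 10) * (143/10^7)) * (51/100)^10 \<le> 117852 / 10^9"
  by (simp add: tlst_def upt11 el_def Slist_def dlist_def power_divide)

lemma tb11: "(\<bar>pev (tlst 11) (1/2)\<bar> + lipm 1 (tlst 11) * (143/10^7)) * (51/100)^11 \<le> 9711434 / 10^9"
  by (simp add: tlst_def upt11 el_def Slist_def dlist_def power_divide)

lemma tb12: "(\<bar>pev (tlst 12) (1/2)\<bar> + lipm 1 (tlst 12) * (143/10^7)) * (51/100)^12 \<le> 288575 / 10^9"
  by (simp add: tlst_def upt11 el_def Slist_def dlist_def power_divide)

lemma tb13: "(\<bar>pev (tlst 13) (1/2)\<bar> + lipm 1 (tlst 13) * (143/10^7)) * (51/100)^13 \<le> 517948 / 10^9"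
  by (simp add: tlst_def upt11 el_def Slist_def dlist_def power_divide)

lemma tb14: "(\<bar>pev (tlst 14) (1/2)\<bar> + lipm 1 (tlst 14) * (143/10^7)) * (51/100)^14 \<le> 206974 / 10^9"
  by (simp add: tlst_def upt11 el_def Slist_def dlist_def power_divide)

lemma tb15: "(\<bar>pev (tlst 15) (1/2)\<bar> + lipm 1 (tlst 15) * (143/10^7)) * (51/100)^15 \<le> 86007 / 10^9"
  by (simp add: tlst_def upt11 el_def Slist_def dlist_def power_divide)

lemma tb16: "(\<bar>pev (tlst 16) (1/2)\<bar> + lipm 1 (tlst 16) * (143/10^7)) * (51/100)^16 \<le> 380148 / 10^9"
  by (simp add: tlst_def upt11 el_def Slist_def dlist_def power_divide)

lemma tb17: "(\<bar>pev (tlst 17) (1/2)\<bar> + lipm 1 (tlst 17) * (143/10^7)) * (51/100)^17 \<le> 216449 / 10^9"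
  by (simp add: tlst_def upt11 el_def Slist_def dlist_def power_divide)

lemma tb18: "(\<bar>pev (tlst 18) (1/2)\<bar> + lipm 1 (tlst 18) * (143/10^7)) * (51/100)^18 \<le> 89849 / 10^9"
  by (simp add: tlst_def upt11 el_def Slist_def dlist_def power_divide)

lemma tb19: "(\<bar>pev (tlst 19) (1/2)\<bar> + lipm 1 (tlst 19) * (143/10^7)) * (51/100)^19 \<le> 47115 / 10^9"
  by (simp add: tlst_def upt11 el_def Slist_def dlist_def power_divide)

lemma tb20: "(\<bar>pev (tlst 20) (1/2)\<bar> + lipm 1 (tlst 20) * (143/10^7)) * (51/100)^20 \<le> 43775 / 10^9"
  by (simp add: tlst_def upt11 el_def Slist_def dlist_def power_divide)

lemma tb21: "(\<bar>pev (tlst 21) (1/2)\<bar> + lipm 1 (tlst 21) * (143/10^7)) * (51/100)^21 \<le> 30182 / 10^9"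
  by (simp add: tlst_def upt11 el_def Slist_def dlist_def power_divide)

lemma tb22: "(\<bar>pev (tlst 22) (1/2)\<bar> + lipm 1 (tlst 22) * (143/10^7)) * (51/100)^22 \<le> 15300 / 10^9"
  by (simp add: tlst_def upt11 el_def Slist_def dlist_def power_divide)

lemma tb23: "(\<bar>pev (tlst 23) (1/2)\<bar> + lipm 1 (tlst 23) * (143/10^7)) * (51/100)^23 \<le> 6205 / 10^9"
  by (simp add: tlst_def upt11 el_def Slist_def dlist_def power_divide)

lemma tb24: "(\<bar>pev (tlst 24) (1/2)\<bar> + lipm 1 (tlst 24) * (143/10^7)) * (51/100)^24 \<le> 2781 / 10^9"
  by (simp add: tlst_def upt11 el_def Slist_def dlist_def power_divide)

lemma tb25: "(\<bar>pev (tlst 25) (1/2)\<bar> + lipm 1 (tlst 25) * (143/10^7)) * (51/100)^25 \<le> 1272 / 10^9"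
  by (simp add: tlst_def upt11 el_def Slist_def dlist_def power_divide)

lemma tb26: "(\<bar>pev (tlst 26) (1/2)\<bar> + lipm 1 (tlst 26) * (143/10^7)) * (51/100)^26 \<le> 350 / 10^9"
  by (simp add: tlst_def upt11 el_def Slist_def dlist_def power_divide)

lemma tb27: "(\<bar>pev (tlst 27) (1/2)\<bar> + lipm 1 (tlst 27) * (143/10^7)) * (51/100)^27 \<le> 39 / 10^9"
  by (simp add: tlst_def upt11 el_def Slist_def dlist_def power_divide)

lemma tau_num: "(\<Sum>k\<in>{1..27}. (\<bar>pev (tlst k) (1/2)\<bar> + lipm 1 (tlst k) * (143/10^7)) * (51/100)^k) \<le> 1"
proof -
  have "(\<Sum>k\<in>{1..27}. (\<bar>pev (tlst k) (1/2)\<bar> + lipm 1 (tlst k) * (143/10^7)) * (51/100)^k) \<le> 2040000 / 10^9 + 2340900 / 10^9 + 2255067 / 10^9 + 1758953 / 10^9 + 1345599 / 10^9 + 950200 / 10^9 + 619214 / 10^9 + 375298 / 10^9 + 214744 / 10^9 + 117852 / 10^9 + 9711434 / 10^9 + 288575 / 10^9 + 517948 / 10^9 + 206974 / 10^9 + 86007 / 10^9 + 380148 / 10^9 + 216449 / 10^9 + 89849 / 10^9 + 47115 / 10^9 + 43775 / 10^9 + 30182 / 10^9 + 15300 / 10^9 + 6205 / 10^9 + 2781 / 10^9 + 1272 / 10^9 + 350 / 10^9 + 39 / 10^9"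
    unfolding sum27 by (intro add_mono tb1 tb2 tb3 tb4 tb5 tb6 tb7 tb8 tb9 tb10 tb11 tb12 tb13 tb14 tb15 tb16 tb17 tb18 tb19 tb20 tb21 tb22 tb23 tb24 tb25 tb26 tb27)
  also have "\<dots> \<le> 1" by simp
  finally show ?thesis .
qed

lemma upt18: "[0..<18] = [0,1,2,3,4,5,6,7,8,9,10,11,12,13,14,15,16,17::nat]" by code_simp

lemma sum17: "(\<Sum>k\<le>17::nat. g k) = g 0 + g 1 + g 2 + g 3 + g 4 + g 5 + g 6 + g 7 + g 8 + g 9 + g 10 + g 11 + g 12 + g 13 + g 14 + g 15 + g 16 + g 17"
proof -
  have "{..17::nat} = set [0..<18]" by auto
  then have "(\<Sum>k\<le>17::nat. g k) = sum_list (map g [0..<18])"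
    by (simp add: sum_set_upt_conv_sum_list_nat del: set_upt)
  then show ?thesis unfolding upt18 by (simp add: add.assoc)
qed

lemma I1: "(\<Sum>i\<le>17. eps x i * x^i) = - pev Mlist x + pev dlist x"
  unfolding sum17 by (simp add: eps_def el_def dlist_def Mlist_def; algebra)

lemma lipm_nonneg: "0 \<le> m \<Longrightarrow> 0 \<le> lipm m cs"
  by (induction cs) (auto simp: absm_nonneg)

lemma rlo_pos: "1/2 < rlo" by (simp add: rlo_def)
lemma rhi_le: "rhi \<le> 5001/10000" by (simp add: rhi_def)
lemma rhi_half: "rhi - 1/2 \<le> 143/10^7" by (simp add: rhi_def)
lemma rhi_51: "rhi < 51/100" by (simp add: rhi_def)

lemma asym:
  "\<exists>r c :: real.
           \<bar>r - 1.99994300442\<bar> < 1 / 10^11 \<and> \<bar>c - 0.50029301491\<bar> < 1 / 10^11 \<and>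
           ((\<lambda>n. real (a34543 (Suc n)) / real (a34543 n)) \<longlonglongrightarrow> r) \<and>
           (\<lambda>n. real (a34543 n)) \<sim>[at_top] (\<lambda>n. c * r ^ n)"
proof -
  obtain \<rho> where rb1: "rlo \<le> \<rho>" and rb2: "\<rho> \<le> rhi" and D0: "pev dlist \<rho> = 0"
    using root_exists by blast
  have rpos0: "0 < \<rho>" using rb1 rlo_pos by linarith
  define r where "r = 1/\<rho>"
  have rpos: "0 < r" using rpos0 by (simp add: r_def)
  have rr: "r * \<rho> = 1" using rpos0 by (simp add: r_def)
  have epsrel: "\<And>i. i \<le> 17 \<Longrightarrow> dd (Suc i) = eps \<rho> (Suc i) - r * eps \<rho> i"
    using eps_rel[OF D0] rpos0 by (simp add: r_def)
  have eps18: "eps \<rho> (Suc 17) = 0" by (simp add: eps_zero)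
  have epsz: "\<And>i. 17 < i \<Longrightarrow> eps \<rho> i = 0" by (rule eps_zero)
  define X where "X = (\<Sum>i\<le>17. eps \<rho> i * aa (17 - i))"
  define Y where "Y = (\<Sum>i\<le>17. eps \<rho> i * \<rho>^i)"
  define c where "c = \<rho>^17 * X / Y"
  have absr: "\<bar>\<rho>\<bar> \<le> 5001/10000" "\<bar>rlo\<bar> \<le> 5001/10000" using rb1 rb2 rlo_pos rhi_le by auto
  have dlt: "\<bar>\<rho> - rlo\<bar> \<le> 1/2^50" using rb1 rb2 by (simp add: rlo_def rhi_def)
  have LN: "lipm (5001/10000) Nlist \<le> 15" by (simp add: Nlist_def)
  have LM: "lipm (5001/10000) Mlist \<le> 55" by (simp add: Mlist_def)
  have Nd: "\<bar>pev Nlist \<rho> - pev Nlist rlo\<bar> \<le> 15 * (1/2^50)"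
  proof -
    have "\<bar>pev Nlist \<rho> - pev Nlist rlo\<bar> \<le> lipm (5001/10000) Nlist * \<bar>\<rho> - rlo\<bar>"
      by (rule pev_lip[OF absr])
    also have "\<dots> \<le> 15 * (1/2^50)" using LN dlt by (intro mult_mono) auto
    finally show ?thesis .
  qed
  have Md: "\<bar>pev Mlist \<rho> - pev Mlist rlo\<bar> \<le> 55 * (1/2^50)"
  proof -
    have "\<bar>pev Mlist \<rho> - pev Mlist rlo\<bar> \<le> lipm (5001/10000) Mlist * \<bar>\<rho> - rlo\<bar>"
      by (rule pev_lip[OF absr])
    also have "\<dots> \<le> 55 * (1/2^50)" using LM dlt by (intro mult_mono) auto
    finally show ?thesis .
  qed
  have Nb: "669640487389393 / 10^16 - 15 * (1/2^50) \<le> pev Nlist \<rho>" "pev Nlist \<rho> \<le> 669640487389394 / 10^16 + 15 * (1/2^50)"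
    using abs_le_D1[OF Nd] abs_le_D2[OF Nd] N_lo by linarith+
  have Mb: "1338496575873921 / 10^16 - 55 * (1/2^50) \<le> pev Mlist \<rho>" "pev Mlist \<rho> \<le> 1338496575873922 / 10^16 + 55 * (1/2^50)"
    using abs_le_D1[OF Md] abs_le_D2[OF Md] M_lo by linarith+
  have Mpos: "0 < pev Mlist \<rho>" using Mb(1) by simp
  have hY: "Y = - pev Mlist \<rho>" using I1[of \<rho>] D0 by (simp add: Y_def)
  have hX: "\<rho>^17 * X = - pev Nlist \<rho>"
  proof -
    have "X = - (\<Sum>k\<le>17. ncf k * r ^ (17 - k))"
      unfolding X_def
      by (rule h_closed[where L=17 and dd=dd, OF dd0 epsrel]) (auto intro: rec_small)
    then have "\<rho>^17 * X = - (\<Sum>k\<le>17. ncf k * (\<rho>^17 * r^(17-k)))"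
      by (simp add: sum_distrib_left algebra_simps)
    also have "(\<Sum>k\<le>17. ncf k * (\<rho>^17 * r^(17-k))) = (\<Sum>k\<le>17. ncf k * \<rho>^k)"
    proof (intro sum.cong refl)
      fix k assume "k \<in> {..17::nat}"
      then have "\<rho>^17 = \<rho>^k * \<rho>^(17-k)" by (simp add: power_add[symmetric])
      then have "\<rho>^17 * r^(17-k) = \<rho>^k * (r * \<rho>)^(17-k)" by (simp add: power_mult_distrib)
      then show "ncf k * (\<rho>^17 * r^(17-k)) = ncf k * \<rho>^k" using rr by simp
    qed
    finally show ?thesis using ncf_pev[of \<rho>] by simp
  qed
  have Ynz: "Y \<noteq> 0" using hY Mpos by simp
  have c_eq: "c = pev Nlist \<rho> / pev Mlist \<rho>"
    unfolding c_def using hX hY by simp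
  define e where "e n = aa n - c * r^n" for n
  have erec: "(\<Sum>j\<le>Suc 17. dd j * e (m - j)) = 0" if m: "Suc 17 \<le> m" for m
  proof -
    have "(\<Sum>j\<le>18. dd j * e (m - j)) = (\<Sum>j\<le>18. dd j * aa (m - j)) - c * (\<Sum>j\<le>18. dd j * r^(m-j))"
      by (simp add: e_def algebra_simps sum_subtractf sum_distrib_left)
    also have "(\<Sum>j\<le>18. dd j * aa (m - j)) = 0" using m by (intro rec_big) simp
    also have "(\<Sum>j\<le>18. dd j * r^(m-j)) = (\<Sum>j\<le>18. r^m * (dd j * \<rho>^j))"
    proof (intro sum.cong refl)
      fix j assume "j \<in> {..18::nat}"
      then have "j \<le> m" using m by simp
      then have "r^m = r^(m-j) * r^j" by (simp add: power_add[symmetric])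
      then have "r^m * \<rho>^j = r^(m-j) * (r*\<rho>)^j" by (simp add: power_mult_distrib)
      then show "dd j * r^(m-j) = r^m * (dd j * \<rho>^j)" using rr by simp
    qed
    also have "\<dots> = r^m * (\<Sum>j\<le>18. dd j * \<rho>^j)" by (simp add: sum_distrib_left)
    also have "(\<Sum>j\<le>18. dd j * \<rho>^j) = 0" using D0 dd_pev by simp
    finally show ?thesis by simp
  qed
  have g0: "(\<Sum>j\<le>17. eps \<rho> j * e (17 - j)) = 0"
  proof -
    have "(\<Sum>j\<le>17. eps \<rho> j * e (17 - j)) = X - c * (\<Sum>j\<le>17. eps \<rho> j * r^(17-j))"
      by (simp add: e_def X_def algebra_simps sum_subtractf sum_distrib_left)
    also have "(\<Sum>j\<le>17. eps \<rho> j * r^(17-j)) = (\<Sum>j\<le>17. r^17 * (eps \<rho> j * \<rho>^j))"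
    proof (intro sum.cong refl)
      fix j assume "j \<in> {..17::nat}"
      then have "j \<le> 17" by simp
      then have "r^17 = r^(17-j) * r^j" by (simp add: power_add[symmetric])
      then have "r^17 * \<rho>^j = r^(17-j) * (r*\<rho>)^j" by (simp add: power_mult_distrib)
      then show "eps \<rho> j * r^(17-j) = r^17 * (eps \<rho> j * \<rho>^j)" using rr by simp
    qed
    also have "\<dots> = r^17 * Y" by (simp add: Y_def sum_distrib_left)
    also have "c * (r^17 * Y) = X"
    proof -
      have "c * (r^17 * Y) = (r * \<rho>)^17 * X" using Ynz unfolding c_def by (simp add: power_mult_distrib)
      then show ?thesis using rr by simp
    qed
    finally show ?thesis by simp
  qed
  have gz: "(\<Sum>j\<le>17. eps \<rho> j * e (n - j)) = 0" if "17 \<le> n" for n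
    using g_zero[where dd=dd and r=r and \<epsilon>="eps \<rho>" and L=17 and e=e, OF dd0 epsrel eps18 erec g0 that] .
  define s where "s j = real_of_int (Slist ! j)" for j
  define \<tau> where "\<tau> k = (\<Sum>j\<le>10. if j \<le> k then s j * eps \<rho> (k - j) else 0)" for k
  have trec: "(\<Sum>k\<le>27. \<tau> k * e (n - k)) = 0" if "27 \<le> n" for n
    using conv_rec[of 17 "eps \<rho>" e 10 n s] epsz gz that unfolding \<tau>_def by simp
  have t0: "\<tau> 0 = 1" by (simp add: \<tau>_def s_def Slist_def eps_def el_def)
  have tpev: "\<tau> k = pev (tlst k) \<rho>" for k unfolding \<tau>_def pev_tlst s_def by simp
  have rh: "\<bar>\<rho> - 1/2\<bar> \<le> 143/10^7" using rb1 rb2 rlo_pos rhi_half by auto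
  have tnum: "(\<Sum>k\<in>{1..27}. \<bar>\<tau> k\<bar> * (51/100)^k) \<le> 1"
  proof -
    have "(\<Sum>k\<in>{1..27}. \<bar>\<tau> k\<bar> * (51/100)^k) \<le> (\<Sum>k\<in>{1..27::nat}. (\<bar>pev (tlst k) (1/2)\<bar> + lipm 1 (tlst k) * (143/10^7)) * (51/100)^k)"
    proof (intro sum_mono mult_right_mono)
      fix k :: nat
      have "\<bar>pev (tlst k) \<rho> - pev (tlst k) (1/2)\<bar> \<le> lipm 1 (tlst k) * \<bar>\<rho> - 1/2\<bar>"
        by (rule pev_lip) (use absr in auto)
      also have "\<dots> \<le> lipm 1 (tlst k) * (143/10^7)" using rh lipm_nonneg[of 1] by (intro mult_left_mono) auto
      finally show "\<bar>\<tau> k\<bar> \<le> \<bar>pev (tlst k) (1/2)\<bar> + lipm 1 (tlst k) * (143/10^7)"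
        unfolding tpev by linarith
    qed auto
    also have "\<dots> \<le> 1" by (rule tau_num)
    finally show ?thesis .
  qed
  obtain K where K: "\<And>n. \<bar>e n\<bar> * (51/100)^n \<le> K"
    using growth_bound[of \<tau> 27 e 27 "51/100"] t0 trec tnum by auto
  have rbig: "100/51 < r"
  proof -
    have "\<rho> < 51/100" using rb2 rhi_51 by linarith
    then show ?thesis using rpos0 by (simp add: r_def field_simps)
  qed
  define q where "q = 1 / ((51/100) * r)"
  have q0: "0 < q" "q < 1" using rbig rpos by (auto simp: q_def field_simps)
  have elim: "(\<lambda>n. e n / r^n) \<longlonglongrightarrow> 0"
  proof (rule Lim_null_comparison)
    show "(\<lambda>n. K * q^n) \<longlonglongrightarrow> 0"
      by (intro tendsto_mult_right_zero LIMSEQ_power_zero) (use q0 in auto)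
    show "\<forall>\<^sub>F n in sequentially. norm (e n / r^n) \<le> K * q^n"
    proof (intro always_eventually allI)
      fix n
      have "norm (e n / r^n) = (\<bar>e n\<bar> * (51/100)^n) * q^n"
        using rpos by (simp add: q_def abs_divide power_divide power_mult_distrib field_simps)
      also have "\<dots> \<le> K * q^n" using K[of n] q0 by (intro mult_right_mono) auto
      finally show "norm (e n / r^n) \<le> K * q^n" .
    qed
  qed
  have alim: "(\<lambda>n. aa n / r^n) \<longlonglongrightarrow> c"
  proof -
    have "(\<lambda>n. c + e n / r^n) \<longlonglongrightarrow> c + 0" by (intro tendsto_add tendsto_const elim)
    moreover have "aa n / r^n = c + e n / r^n" for n using rpos by (simp add: e_def field_simps)
    ultimately show ?thesis by simp
  qed
  have Npos: "0 < pev Nlist \<rho>" using Nb(1) by simp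
  have cpos: "0 < c" unfolding c_eq using Npos Mpos by simp
  have clo: "(669640487389393 / 10^16 - 15 * (1/2^50)) / (1338496575873922 / 10^16 + 55 * (1/2^50)) \<le> c"
    unfolding c_eq by (rule frac_le[OF _ Nb(1) Mpos Mb(2)]) (use Npos in simp)
  have chi: "c \<le> (669640487389394 / 10^16 + 15 * (1/2^50)) / (1338496575873921 / 10^16 - 55 * (1/2^50))"
    unfolding c_eq by (rule frac_le[OF _ Nb(2) _ Mb(1)]) simp_all
  have cl: "(0.50029301490::real) < (669640487389393 / 10^16 - 15 * (1/2^50)) / (1338496575873922 / 10^16 + 55 * (1/2^50))"
    by simp
  have ch: "(669640487389394 / 10^16 + 15 * (1/2^50)) / (1338496575873921 / 10^16 - 55 * (1/2^50)) < (0.50029301492::real)"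
    by simp
  have cbound: "\<bar>c - 0.50029301491\<bar> < 1 / 10^11"
  proof -
    have "c - 0.50029301491 < 1 / 10^11" using chi ch by linarith
    moreover have "- (c - 0.50029301491) < 1 / 10^11" using clo cl by linarith
    ultimately show ?thesis by (simp only: abs_less_iff)
  qed
  have rlo': "r \<le> 1 / rlo" unfolding r_def using rb1 rlo_pos by (intro divide_left_mono) auto
  have rhi': "1 / rhi \<le> r" unfolding r_def using rb2 rpos0 by (intro divide_left_mono) auto
  have rl: "(1.99994300441::real) < 1 / rhi" by (simp add: rhi_def)
  have rh2: "1 / rlo < (1.99994300443::real)" by (simp add: rlo_def)
  have rbound: "\<bar>r - 1.99994300442\<bar> < 1 / 10^11"
  proof -
    have "r - 1.99994300442 < 1 / 10^11" using rlo' rh2 by linarith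
    moreover have "- (r - 1.99994300442) < 1 / 10^11" using rhi' rl by linarith
    ultimately show ?thesis by (simp only: abs_less_iff)
  qed
  have ratio: "(\<lambda>n. aa (Suc n) / aa n) \<longlonglongrightarrow> r"
  proof -
    have "(\<lambda>n. r * (aa (Suc n) / r^(Suc n)) / (aa n / r^n)) \<longlonglongrightarrow> r * c / c"
      by (intro tendsto_divide tendsto_mult tendsto_const LIMSEQ_Suc[OF alim] alim) (use cpos in simp)
    moreover have eqrc: "r * c / c = r" using cpos by simp
    ultimately have L: "(\<lambda>n. r * (aa (Suc n) / r^(Suc n)) / (aa n / r^n)) \<longlonglongrightarrow> r" by simp
    have fe: "(\<lambda>n. aa (Suc n) / aa n) = (\<lambda>n. r * (aa (Suc n) / r^(Suc n)) / (aa n / r^n))"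
    proof (rule ext)
      fix n
      show "aa (Suc n) / aa n = r * (aa (Suc n) / r^(Suc n)) / (aa n / r^n)"
      proof (cases "aa n = 0")
        case True
        then show ?thesis by simp
      next
        case False
        then show ?thesis using rpos by (simp add: field_simps)
      qed
    qed
    show ?thesis unfolding fe by (rule L)
  qed
  have equiv: "(\<lambda>n. aa n) \<sim>[at_top] (\<lambda>n. c * r ^ n)"
  proof (rule asymp_equivI')
    have "(\<lambda>n. (aa n / r^n) / c) \<longlonglongrightarrow> c / c"
      by (intro tendsto_divide alim tendsto_const) (use cpos in simp)
    moreover have "c / c = 1" using cpos by simp
    ultimately have L: "(\<lambda>n. (aa n / r^n) / c) \<longlonglongrightarrow> 1" by simp
    have fe: "(\<lambda>n. aa n / (c * r ^ n)) = (\<lambda>n. (aa n / r^n) / c)"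
      by (rule ext) (simp add: field_simps)
    show "(\<lambda>n. aa n / (c * r ^ n)) \<longlonglongrightarrow> 1" unfolding fe by (rule L)
  qed
  show ?thesis using rbound cbound ratio equiv by blast
qed


theorem theorem1:
  shows "(Abs_fps (\<lambda>n. real (a34543 n)) =
           - (1 - 4*fps_X + 6*fps_X^2 - 4*fps_X^3 + fps_X^4 + fps_X^16 + fps_X^13 - fps_X^14
              + fps_X^9 - 2*fps_X^10 + fps_X^11 + fps_X^5 - 3*fps_X^6 + 3*fps_X^7 - fps_X^8)
             / (fps_X^18 + fps_X^17 - fps_X^16 + 2*fps_X^14 - fps_X^13 - 2*fps_X^11 + 3*fps_X^10
              - fps_X^9 + 2*fps_X^8 - 5*fps_X^7 + 4*fps_X^6 - fps_X^5 - 2*fps_X^4 + 7*fps_X^3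
              - 9*fps_X^2 + 5*fps_X - 1)) \<and>
         map a34543 [0..<31] =
           [1, 1, 2, 4, 8, 16, 32, 64, 128, 256, 512, 1024, 2048, 4096, 8192, 16384, 32768,
            65536, 131072, 262143, 524281, 1048546, 2097050, 4194001, 8387784, 16775108,
            33549270, 67096623, 134189393, 268371074, 536726740] \<and>
         (\<exists>r c :: real.
           \<bar>r - 1.99994300442\<bar> < 1 / 10^11 \<and> \<bar>c - 0.50029301491\<bar> < 1 / 10^11 \<and>
           ((\<lambda>n. real (a34543 (Suc n)) / real (a34543 n)) \<longlonglongrightarrow> r) \<and>
           (\<lambda>n. real (a34543 n)) \<sim>[at_top] (\<lambda>n. c * r ^ n))"
  using gf values31 asym by blast

end
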